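(* Let $A=\mathcal{W}(H,\theta,z_0,z_1)$ be a triangular generalized Weyl algebra, and give $A$ the $\mathbb{Z}$-grading with $\deg u=1$, $\deg d=-1$, $\deg H=0$; let $A[m]$ denote its degree-$m$ component. Then for every $m\in\mathbb{Z}$, $A[m]$ is isomorphic to $H[du]$ as a left $H[du]$-module.
   Context: $\mathbb{F}$ is a field, $H$ a commutative $\mathbb{F}$-algebra, $\theta:H\to H$ an $\mathbb{F}$-algebra automorphism, $z_0\in H$, $z_1\in H^\times$, and $\mathcal{W}(H,\theta,z_0,z_1):=H\langle d,u\rangle/(uh=\theta(h)u,\ hd=d\theta(h),\ ud=z_0+dz_1u\ \forall h\in H)$. Here $H[du]$ denotes the subalgebra of $A$ generated by $H$ and $du$ (which commutes with $H$). *)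

theory Defs
  imports Main
begin

text \<open>The field F is a type 'f :: field; the commutative F-algebra H is a type
'h :: comm_ring_1 together with its structure map iota : F -> H (a ring homomorphism).
H<d,u> is realised as the F-algebra freely generated by the symbols GH h (h in H), GD, GU,
modulo the relations making h |-> GH h an F-algebra homomorphism; together with the
defining relations of W this gives W(H,theta,z0,z1) as a quotient of the free algebra.\<close>

definition is_alg_map :: "('f::field \<Rightarrow> 'h::comm_ring_1) \<Rightarrow> bool" where
  "is_alg_map \<iota> \<longleftrightarrow> \<iota> 1 = 1 \<and> (\<forall>a b. \<iota> (a + b) = \<iota> a + \<iota> b) \<and> (\<forall>a b. \<iota> (a * b) = \<iota> a * \<iota> b)"

definition is_alg_automorphism :: "('f::field \<Rightarrow> 'h::comm_ring_1) \<Rightarrow> ('h \<Rightarrow> 'h) \<Rightarrow> bool" where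
  "is_alg_automorphism \<iota> \<theta> \<longleftrightarrow> bij \<theta> \<and> \<theta> 1 = 1 \<and> (\<forall>a b. \<theta> (a + b) = \<theta> a + \<theta> b)
     \<and> (\<forall>a b. \<theta> (a * b) = \<theta> a * \<theta> b) \<and> (\<forall>c. \<theta> (\<iota> c) = \<iota> c)"

datatype 'h gsym = GH 'h | GD | GU

text \<open>Free F-algebra on the symbols: finitely supported functions from words to F.\<close>
type_synonym ('f, 'h) fa = "'h gsym list \<Rightarrow> 'f"

definition FA :: "('f::field, 'h) fa set" where
  "FA = {p. finite {w. p w \<noteq> 0}}"

definition fa_add :: "('f::field, 'h) fa \<Rightarrow> ('f, 'h) fa \<Rightarrow> ('f, 'h) fa" where
  "fa_add p q = (\<lambda>w. p w + q w)"

definition fa_diff :: "('f::field, 'h) fa \<Rightarrow> ('f, 'h) fa \<Rightarrow> ('f, 'h) fa" where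
  "fa_diff p q = (\<lambda>w. p w - q w)"

definition fa_zero :: "('f::field, 'h) fa" where
  "fa_zero = (\<lambda>w. 0)"

definition fa_mult :: "('f::field, 'h) fa \<Rightarrow> ('f, 'h) fa \<Rightarrow> ('f, 'h) fa" where
  "fa_mult p q = (\<lambda>w. \<Sum>i\<le>length w. p (take i w) * q (drop i w))"

definition fa_scal :: "'f::field \<Rightarrow> ('f, 'h) fa" where
  "fa_scal c = (\<lambda>w. if w = [] then c else 0)"

definition fa_gen :: "'h gsym \<Rightarrow> ('f::field, 'h) fa" where
  "fa_gen s = (\<lambda>w. if w = [s] then 1 else 0)"

definition gwa_rels :: "('f::field \<Rightarrow> 'h::comm_ring_1) \<Rightarrow> ('h \<Rightarrow> 'h) \<Rightarrow> 'h \<Rightarrow> 'h \<Rightarrow> ('f, 'h) fa set" where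
  "gwa_rels \<iota> \<theta> z0 z1 =
     {fa_diff (fa_gen (GH (a + b))) (fa_add (fa_gen (GH a)) (fa_gen (GH b))) | a b. True}
   \<union> {fa_diff (fa_gen (GH (a * b))) (fa_mult (fa_gen (GH a)) (fa_gen (GH b))) | a b. True}
   \<union> {fa_diff (fa_gen (GH (\<iota> c * a))) (fa_mult (fa_scal c) (fa_gen (GH a))) | c a. True}
   \<union> {fa_diff (fa_gen (GH 1)) (fa_scal 1)}
   \<union> {fa_diff (fa_mult (fa_gen GU) (fa_gen (GH h))) (fa_mult (fa_gen (GH (\<theta> h))) (fa_gen GU)) | h. True}
   \<union> {fa_diff (fa_mult (fa_gen (GH h)) (fa_gen GD)) (fa_mult (fa_gen GD) (fa_gen (GH (\<theta> h)))) | h. True}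
   \<union> {fa_diff (fa_mult (fa_gen GU) (fa_gen GD))
        (fa_add (fa_gen (GH z0)) (fa_mult (fa_mult (fa_gen GD) (fa_gen (GH z1))) (fa_gen GU)))}"

inductive_set ideal_gen :: "('f::field, 'h) fa set \<Rightarrow> ('f, 'h) fa set" for R where
  base: "r \<in> R \<Longrightarrow> r \<in> ideal_gen R"
| zero: "fa_zero \<in> ideal_gen R"
| add: "x \<in> ideal_gen R \<Longrightarrow> y \<in> ideal_gen R \<Longrightarrow> fa_add x y \<in> ideal_gen R"
| lmult: "a \<in> FA \<Longrightarrow> x \<in> ideal_gen R \<Longrightarrow> fa_mult a x \<in> ideal_gen R"
| rmult: "a \<in> FA \<Longrightarrow> x \<in> ideal_gen R \<Longrightarrow> fa_mult x a \<in> ideal_gen R"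

definition gwa_ideal where
  "gwa_ideal \<iota> \<theta> z0 z1 = ideal_gen (gwa_rels \<iota> \<theta> z0 z1)"

definition gwa_cls :: "('f::field \<Rightarrow> 'h::comm_ring_1) \<Rightarrow> ('h \<Rightarrow> 'h) \<Rightarrow> 'h \<Rightarrow> 'h \<Rightarrow> ('f, 'h) fa \<Rightarrow> ('f, 'h) fa set" where
  "gwa_cls \<iota> \<theta> z0 z1 x = {y \<in> FA. fa_diff y x \<in> gwa_ideal \<iota> \<theta> z0 z1}"

definition gwa_carrier where
  "gwa_carrier \<iota> \<theta> z0 z1 = gwa_cls \<iota> \<theta> z0 z1 ` FA"

definition gwa_rep :: "('f, 'h) fa set \<Rightarrow> ('f::field, 'h) fa" where
  "gwa_rep X = (SOME x. x \<in> X)"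

definition gwa_add where
  "gwa_add \<iota> \<theta> z0 z1 X Y = gwa_cls \<iota> \<theta> z0 z1 (fa_add (gwa_rep X) (gwa_rep Y))"

definition gwa_mult where
  "gwa_mult \<iota> \<theta> z0 z1 X Y = gwa_cls \<iota> \<theta> z0 z1 (fa_mult (gwa_rep X) (gwa_rep Y))"

fun word_deg :: "'h gsym list \<Rightarrow> int" where
  "word_deg [] = 0"
| "word_deg (GU # w) = word_deg w + 1"
| "word_deg (GD # w) = word_deg w - 1"
| "word_deg (GH _ # w) = word_deg w"

definition fa_homog :: "int \<Rightarrow> ('f::field, 'h) fa set" where
  "fa_homog m = {p \<in> FA. \<forall>w. p w \<noteq> 0 \<longrightarrow> word_deg w = m}"

text \<open>A[m]: the degree-m component of A (image of the degree-m part of the free algebra;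
the defining relations are homogeneous).\<close>
definition gwa_component where
  "gwa_component \<iota> \<theta> z0 z1 m = gwa_cls \<iota> \<theta> z0 z1 ` fa_homog m"

inductive_set fa_subalg :: "('f::field, 'h) fa set \<Rightarrow> ('f, 'h) fa set" for G where
  gen: "g \<in> G \<Longrightarrow> g \<in> fa_subalg G"
| scal: "fa_scal c \<in> fa_subalg G"
| add: "x \<in> fa_subalg G \<Longrightarrow> y \<in> fa_subalg G \<Longrightarrow> fa_add x y \<in> fa_subalg G"
| mult: "x \<in> fa_subalg G \<Longrightarrow> y \<in> fa_subalg G \<Longrightarrow> fa_mult x y \<in> fa_subalg G"

definition gwa_Hdu where
  "gwa_Hdu \<iota> \<theta> z0 z1 = gwa_cls \<iota> \<theta> z0 z1 `
     fa_subalg ({fa_gen (GH h) | h. True} \<union> {fa_mult (fa_gen GD) (fa_gen GU)})"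

definition gwa_left_module_iso where
  "gwa_left_module_iso \<iota> \<theta> z0 z1 Rg M N \<phi> \<longleftrightarrow>
     bij_betw \<phi> M N
     \<and> (\<forall>X\<in>M. \<forall>Y\<in>M. \<phi> (gwa_add \<iota> \<theta> z0 z1 X Y) = gwa_add \<iota> \<theta> z0 z1 (\<phi> X) (\<phi> Y))
     \<and> (\<forall>r\<in>Rg. \<forall>X\<in>M. \<phi> (gwa_mult \<iota> \<theta> z0 z1 r X) = gwa_mult \<iota> \<theta> z0 z1 r (\<phi> X))"

end

theory Submission
  imports Defs "HOL-Library.Function_Algebras"
begin

definition mon :: "'h gsym list \<Rightarrow> ('f::field, 'h) fa" where
  "mon a = (\<lambda>w. if w = a then 1 else 0)"

definition smul :: "'f::field \<Rightarrow> ('f, 'h) fa \<Rightarrow> ('f, 'h) fa" where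
  "smul c p = (\<lambda>w. c * p w)"

lemma sum_fun_apply: "(\<Sum>a\<in>A. f a) x = (\<Sum>a\<in>A. f a x)"
  by (induction A rule: infinite_finite_induct) auto

lemma fa_add_eq: "fa_add p q = p + q" by (simp add: fa_add_def plus_fun_def)
lemma fa_diff_eq: "fa_diff p q = p - q" by (simp add: fa_diff_def fun_diff_def)
lemma fa_zero_eq: "fa_zero = 0" by (simp add: fa_zero_def zero_fun_def)
lemma fa_gen_eq: "fa_gen s = mon [s]" by (simp add: fa_gen_def mon_def)
lemma fa_scal_eq: "fa_scal c = smul c (mon [])" by (auto simp: fa_scal_def smul_def mon_def)

lemma FA_iff: "p \<in> FA \<longleftrightarrow> finite {w. p w \<noteq> 0}" by (simp add: FA_def)

lemma FA_zero[simp]: "0 \<in> FA" by (simp add: FA_def)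
lemma FA_zero'[simp]: "(\<lambda>w. 0) \<in> FA" by (simp add: FA_def)
lemma FA_add[simp]: "p \<in> FA \<Longrightarrow> q \<in> FA \<Longrightarrow> p + q \<in> FA"
  unfolding FA_def by (auto intro: finite_subset[of _ "{w. p w \<noteq> 0} \<union> {w. q w \<noteq> 0}"])
lemma FA_uminus[simp]: "p \<in> FA \<Longrightarrow> - p \<in> FA"
  unfolding FA_def by simp
lemma FA_diff[simp]: "p \<in> FA \<Longrightarrow> q \<in> FA \<Longrightarrow> p - q \<in> FA"
  unfolding FA_def by (auto intro: finite_subset[of _ "{w. p w \<noteq> 0} \<union> {w. q w \<noteq> 0}"])
lemma FA_smul[simp]: "p \<in> FA \<Longrightarrow> smul c p \<in> FA"
  unfolding FA_def smul_def by (auto elim!: finite_subset[rotated])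
lemma FA_mon[simp]: "mon a \<in> FA"
  unfolding FA_def mon_def by (auto elim!: finite_subset[rotated])
lemma FA_sum[simp]: "(\<And>a. a \<in> A \<Longrightarrow> f a \<in> FA) \<Longrightarrow> (\<Sum>a\<in>A. f a) \<in> FA"
  by (induction A rule: infinite_finite_induct) auto

lemma mult_add_left: "fa_mult (p + q) r = fa_mult p r + fa_mult q r"
  by (simp add: fa_mult_def fun_eq_iff distrib_right sum.distrib)
lemma mult_add_right: "fa_mult r (p + q) = fa_mult r p + fa_mult r q"
  by (simp add: fa_mult_def fun_eq_iff distrib_left sum.distrib)
lemma mult_diff_left: "fa_mult (p - q) r = fa_mult p r - fa_mult q r"
  by (simp add: fa_mult_def fun_eq_iff left_diff_distrib sum_subtractf)
lemma mult_diff_right: "fa_mult r (p - q) = fa_mult r p - fa_mult r q"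
  by (simp add: fa_mult_def fun_eq_iff right_diff_distrib sum_subtractf)
lemma mult_zero_left[simp]: "fa_mult 0 r = 0"
  by (simp add: fa_mult_def fun_eq_iff)
lemma mult_zero_right[simp]: "fa_mult r 0 = 0"
  by (simp add: fa_mult_def fun_eq_iff)
lemma mult_smul_left: "fa_mult (smul c p) r = smul c (fa_mult p r)"
  by (simp add: fa_mult_def smul_def fun_eq_iff sum_distrib_left mult.assoc)
lemma mult_smul_right: "fa_mult r (smul c p) = smul c (fa_mult r p)"
  by (simp add: fa_mult_def smul_def fun_eq_iff sum_distrib_left mult.left_commute)
lemma mult_sum_left: "fa_mult (\<Sum>a\<in>A. f a) r = (\<Sum>a\<in>A. fa_mult (f a) r)"
  unfolding fun_eq_iff fa_mult_def sum_fun_apply sum_distrib_right by (rule allI, rule sum.swap)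
lemma mult_sum_right: "fa_mult r (\<Sum>a\<in>A. f a) = (\<Sum>a\<in>A. fa_mult r (f a))"
  unfolding fun_eq_iff fa_mult_def sum_fun_apply sum_distrib_left by (rule allI, rule sum.swap)
lemma smul_sum: "smul c (\<Sum>a\<in>A. f a) = (\<Sum>a\<in>A. smul c (f a))"
  by (induction A rule: infinite_finite_induct) (auto simp: smul_def fun_eq_iff distrib_left)
lemma smul_smul: "smul c (smul d p) = smul (c * d) p"
  by (simp add: smul_def mult.assoc)

lemma mon_mult: "fa_mult (mon a) (mon b) = (mon (a @ b) :: ('f::field,'h) fa)"
proof (rule ext)
  fix w :: "'h gsym list"
  have "fa_mult (mon a) (mon b) w = (\<Sum>i\<le>length w. if i = length a \<and> w = a @ b then (1::'f) else 0)"
    unfolding fa_mult_def mon_def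
  proof (rule sum.cong[OF refl])
    fix i assume "i \<in> {..length w}"
    then have "i \<le> length w" by simp
    then have "(take i w = a \<and> drop i w = b) \<longleftrightarrow> (i = length a \<and> w = a @ b)"
      by (metis append_eq_conv_conj append_take_drop_id length_take min.absorb2)
    then show "(if take i w = a then 1 else 0) * (if drop i w = b then 1 else 0) =
      (if i = length a \<and> w = a @ b then (1::'f) else 0)" by auto
  qed
  also have "\<dots> = (mon (a @ b) :: ('f,'h) fa) w"
    by (auto simp: mon_def)
  finally show "fa_mult (mon a) (mon b) w = (mon (a @ b) :: ('f,'h) fa) w" .
qed

lemma expand: "p \<in> FA \<Longrightarrow> p = (\<Sum>w\<in>{w. p w \<noteq> 0}. smul (p w) (mon w))"
  apply (rule ext)
  by (auto simp: sum_fun_apply smul_def mon_def FA_def if_distrib cong: if_cong)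

lemma FA_mult[simp]: assumes "p \<in> FA" "q \<in> FA" shows "fa_mult p q \<in> FA"
proof -
  have "{w. fa_mult p q w \<noteq> 0} \<subseteq> (\<lambda>(a,b). a @ b) ` ({w. p w \<noteq> 0} \<times> {w. q w \<noteq> 0})"
  proof
    fix w assume "w \<in> {w. fa_mult p q w \<noteq> 0}"
    then obtain i where "i \<le> length w" "p (take i w) * q (drop i w) \<noteq> 0"
      unfolding fa_mult_def by (auto elim: sum.not_neutral_contains_not_neutral)
    then show "w \<in> (\<lambda>(a,b). a @ b) ` ({w. p w \<noteq> 0} \<times> {w. q w \<noteq> 0})"
      by (auto intro!: image_eqI[of _ _ "(take i w, drop i w)"])
  qed
  then show ?thesis using assms unfolding FA_def
    by (auto elim!: finite_subset intro!: finite_imageI finite_cartesian_product)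
qed

lemma assoc_sums:
  "fa_mult (fa_mult (\<Sum>a\<in>A. smul (f a) (mon a)) (\<Sum>b\<in>B. smul (g b) (mon b))) (\<Sum>c\<in>C. smul (h c) (mon c))
   = fa_mult (\<Sum>a\<in>A. smul (f a) (mon a)) (fa_mult (\<Sum>b\<in>B. smul (g b) (mon b)) (\<Sum>c\<in>C. smul (h c) (mon c)))"
  by (simp add: mult_sum_left mult_sum_right mult_smul_left mult_smul_right mon_mult smul_sum)

lemma mult_assoc: assumes "p \<in> FA" "q \<in> FA" "r \<in> FA"
  shows "fa_mult (fa_mult p q) r = fa_mult p (fa_mult q r)"
  using assoc_sums[of "\<lambda>w. p w" "{w. p w \<noteq> 0}" "\<lambda>w. q w" "{w. q w \<noteq> 0}" "\<lambda>w. r w" "{w. r w \<noteq> 0}"]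
  by (simp only: expand[OF assms(1), symmetric] expand[OF assms(2), symmetric] expand[OF assms(3), symmetric])

lemma mon_unit_left: "p \<in> FA \<Longrightarrow> fa_mult (mon []) p = p"
proof -
  assume a: "p \<in> FA"
  have "fa_mult (mon []) (\<Sum>w\<in>{w. p w \<noteq> 0}. smul (p w) (mon w)) = (\<Sum>w\<in>{w. p w \<noteq> 0}. smul (p w) (mon w))"
    by (simp add: mult_sum_right mult_smul_right mon_mult)
  then show ?thesis by (simp only: expand[OF a, symmetric])
qed
lemma mon_unit_right: "p \<in> FA \<Longrightarrow> fa_mult p (mon []) = p"
proof -
  assume a: "p \<in> FA"
  have "fa_mult (\<Sum>w\<in>{w. p w \<noteq> 0}. smul (p w) (mon w)) (mon []) = (\<Sum>w\<in>{w. p w \<noteq> 0}. smul (p w) (mon w))"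
    by (simp add: mult_sum_left mult_smul_left mon_mult)
  then show ?thesis by (simp only: expand[OF a, symmetric])
qed


notation fa_mult (infixl "\<odot>" 70)

lemma scal_mult: "p \<in> FA \<Longrightarrow> fa_scal c \<odot> p = smul c p"
  by (simp add: fa_scal_eq mult_smul_left mon_unit_left)

lemma smul_neg: "smul (-1) p = - p" by (simp add: smul_def fun_eq_iff)

lemma FA_scal[simp]: "fa_scal c \<in> FA" by (simp add: fa_scal_eq)

locale gw =
  fixes \<iota> :: "'f::field \<Rightarrow> 'h::comm_ring_1" and \<theta> :: "'h \<Rightarrow> 'h" and z0 z1 :: 'h
  assumes alg: "is_alg_map \<iota>" and aut: "is_alg_automorphism \<iota> \<theta>" and z1u: "\<exists>w. z1 * w = 1"
begin

abbreviation "I \<equiv> gwa_ideal \<iota> \<theta> z0 z1"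

lemma rels_FA: "r \<in> gwa_rels \<iota> \<theta> z0 z1 \<Longrightarrow> r \<in> FA"
  unfolding gwa_rels_def fa_gen_eq fa_diff_eq fa_add_eq fa_scal_eq by auto

lemma I_FA: "x \<in> I \<Longrightarrow> x \<in> FA"
  unfolding gwa_ideal_def
proof (induction rule: ideal_gen.induct)
  case (base r) then show ?case by (rule rels_FA)
next
  case zero show ?case unfolding fa_zero_eq by (rule FA_zero)
next
  case (add x y) 
  have "x + y \<in> FA" using add.IH by (intro FA_add)
  then show ?case by (simp only: fa_add_eq)
next
  case (lmult a x) from lmult.hyps(1) lmult.IH show ?case by (rule FA_mult)
next
  case (rmult a x) from rmult.IH rmult.hyps(1) show ?case by (rule FA_mult)
qed

lemma I_zero[simp]: "0 \<in> I"
  unfolding gwa_ideal_def using ideal_gen.zero[of "gwa_rels \<iota> \<theta> z0 z1"] by (simp add: fa_zero_def zero_fun_def)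
lemma I_add: "x \<in> I \<Longrightarrow> y \<in> I \<Longrightarrow> x + y \<in> I"
  unfolding gwa_ideal_def using ideal_gen.add[of x _ y] by (simp add: fa_add_eq)
lemma I_lmult: "a \<in> FA \<Longrightarrow> x \<in> I \<Longrightarrow> a \<odot> x \<in> I"
  unfolding gwa_ideal_def by (rule ideal_gen.lmult)
lemma I_rmult: "a \<in> FA \<Longrightarrow> x \<in> I \<Longrightarrow> x \<odot> a \<in> I"
  unfolding gwa_ideal_def by (rule ideal_gen.rmult)
lemma I_smul: assumes "x \<in> I" shows "smul c x \<in> I"
proof -
  have "fa_scal c \<odot> x \<in> I" by (rule I_lmult[OF FA_scal assms])
  then show ?thesis by (simp only: scal_mult[OF I_FA[OF assms]])
qed
lemma I_uminus: assumes "x \<in> I" shows "- x \<in> I"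
proof -
  have "smul (-1) x \<in> I" by (rule I_smul[OF assms])
  then show ?thesis by (simp only: smul_neg)
qed
lemma I_diff: assumes "x \<in> I" "y \<in> I" shows "x - y \<in> I"
proof -
  have "x + - y \<in> I" by (rule I_add[OF assms(1) I_uminus[OF assms(2)]])
  then show ?thesis by (simp only: diff_conv_add_uminus)
qed
lemma I_rel: "r \<in> gwa_rels \<iota> \<theta> z0 z1 \<Longrightarrow> r \<in> I"
  unfolding gwa_ideal_def by (rule ideal_gen.base)

definition eqv (infix "\<approx>" 50) where
  "x \<approx> y \<longleftrightarrow> x \<in> FA \<and> y \<in> FA \<and> x - y \<in> I"

lemma eqv_refl[intro]: "x \<in> FA \<Longrightarrow> x \<approx> x" by (simp add: eqv_def)
lemma eqv_eq: "x = y \<Longrightarrow> x \<in> FA \<Longrightarrow> x \<approx> y" by (simp add: eqv_def)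
lemma eqv_sym: "x \<approx> y \<Longrightarrow> y \<approx> x"
proof -
  assume a: "x \<approx> y"
  have e: "y - x = - (x - y)" by simp
  have "- (x - y) \<in> I" using a by (intro I_uminus) (simp add: eqv_def)
  then show ?thesis using a unfolding eqv_def e by simp
qed
lemma eqv_trans[trans]: "x \<approx> y \<Longrightarrow> y \<approx> z \<Longrightarrow> x \<approx> z"
proof -
  assume a: "x \<approx> y" "y \<approx> z"
  have e: "x - z = (x - y) + (y - z)" by simp
  have "(x - y) + (y - z) \<in> I" using a by (intro I_add) (simp_all add: eqv_def)
  then show ?thesis using a unfolding eqv_def e by simp
qed
lemma eqv_trans_eq1[trans]: "x = y \<Longrightarrow> y \<approx> z \<Longrightarrow> x \<approx> z" by simp
lemma eqv_trans_eq2[trans]: "x \<approx> y \<Longrightarrow> y = z \<Longrightarrow> x \<approx> z" by simp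
lemma eqv_FA1: "x \<approx> y \<Longrightarrow> x \<in> FA" by (simp add: eqv_def)
lemma eqv_FA2: "x \<approx> y \<Longrightarrow> y \<in> FA" by (simp add: eqv_def)
lemma eqv_add: "x \<approx> x' \<Longrightarrow> y \<approx> y' \<Longrightarrow> x + y \<approx> x' + y'"
proof -
  assume a: "x \<approx> x'" "y \<approx> y'"
  have e: "(x + y) - (x' + y') = (x - x') + (y - y')" by (simp add: algebra_simps)
  have "(x - x') + (y - y') \<in> I" using a by (intro I_add) (auto simp: eqv_def)
  then show ?thesis using a unfolding eqv_def e by auto
qed
lemma eqv_diff: "x \<approx> x' \<Longrightarrow> y \<approx> y' \<Longrightarrow> x - y \<approx> x' - y'"
proof -
  assume a: "x \<approx> x'" "y \<approx> y'"
  have e: "(x - y) - (x' - y') = (x - x') - (y - y')" by (simp add: algebra_simps)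
  have "(x - x') - (y - y') \<in> I" apply (rule I_diff) using a by (auto simp: eqv_def)
  then show ?thesis using a unfolding eqv_def e by auto
qed
lemma eqv_smul: "x \<approx> x' \<Longrightarrow> smul c x \<approx> smul c x'"
proof -
  assume a: "x \<approx> x'"
  have "smul c x - smul c x' = smul c (x - x')" by (simp add: smul_def fun_eq_iff right_diff_distrib)
  then show ?thesis using a I_smul unfolding eqv_def by auto
qed
lemma eqv_mult: "x \<approx> x' \<Longrightarrow> y \<approx> y' \<Longrightarrow> x \<odot> y \<approx> x' \<odot> y'"
proof -
  assume a: "x \<approx> x'" "y \<approx> y'"
  have e: "x \<odot> y - x' \<odot> y' = (x - x') \<odot> y + x' \<odot> (y - y')"
    by (simp add: mult_diff_left mult_diff_right)
  show ?thesis using a I_add[OF I_rmult I_lmult] unfolding eqv_def e by auto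
qed
lemma eqv_zeroI: "x \<in> I \<Longrightarrow> x \<approx> 0" using I_FA by (simp add: eqv_def)
lemma eqv_zeroD: "x \<approx> 0 \<Longrightarrow> x \<in> I" by (simp add: eqv_def)

lemma eqv_sum: "(\<And>a. a \<in> A \<Longrightarrow> f a \<approx> g a) \<Longrightarrow> (\<Sum>a\<in>A. f a) \<approx> (\<Sum>a\<in>A. g a)"
proof (induction A rule: infinite_finite_induct)
  case (insert x F)
  have "f x + sum f F \<approx> g x + sum g F" using insert by (intro eqv_add) auto
  then show ?case by (simp only: sum.insert[OF insert(1,2)])
qed auto

lemma eqv_sum_zero: "(\<And>a. a \<in> A \<Longrightarrow> f a \<approx> 0) \<Longrightarrow> (\<Sum>a\<in>A. f a) \<approx> 0"
  using eqv_sum[of A f "\<lambda>_. 0"] by simp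

end

lemma mult_sum_list_right: "fa_mult r (sum_list (map f L)) = sum_list (map (\<lambda>e. fa_mult r (f e)) L)"
proof (induction L)
  case Nil show ?case by (simp only: list.map sum_list.Nil mult_zero_right)
next
  case (Cons a L) then show ?case by (simp only: list.map sum_list.Cons mult_add_right)
qed
lemma smul_sum_list: "smul c (sum_list (map f L)) = sum_list (map (\<lambda>e. smul c (f e)) L)"
  by (induction L) (simp_all add: smul_def fun_eq_iff distrib_left)
lemma FA_sum_list[simp]: "(\<And>e. e \<in> set L \<Longrightarrow> f e \<in> FA) \<Longrightarrow> sum_list (map f L) \<in> FA"
  by (induction L) simp_all

context gw
begin

definition "\<theta>i = inv \<theta>"

lemma \<iota>_props: "\<iota> 1 = 1" "\<iota> (a + b) = \<iota> a + \<iota> b" "\<iota> (a * b) = \<iota> a * \<iota> b"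
  using alg unfolding is_alg_map_def by auto
lemma \<iota>_0[simp]: "\<iota> 0 = 0" using \<iota>_props(2)[of 0 0] by simp
lemma \<theta>_props: "bij \<theta>" "\<theta> 1 = 1" "\<theta> (a + b) = \<theta> a + \<theta> b" "\<theta> (a * b) = \<theta> a * \<theta> b" "\<theta> (\<iota> c) = \<iota> c"
  using aut unfolding is_alg_automorphism_def by auto
lemma \<theta>_0[simp]: "\<theta> 0 = 0" using \<theta>_props(3)[of 0 0] by simp
lemma \<theta>_\<theta>i[simp]: "\<theta> (\<theta>i x) = x" unfolding \<theta>i_def using \<theta>_props(1) by (simp add: bij_is_surj surj_f_inv_f)
lemma \<theta>i_\<theta>[simp]: "\<theta>i (\<theta> x) = x" unfolding \<theta>i_def using \<theta>_props(1) by (simp add: bij_is_inj inv_f_f)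
lemma \<theta>_inj: "\<theta> x = \<theta> y \<Longrightarrow> x = y" using \<theta>i_\<theta> by metis
lemma \<theta>i_add: "\<theta>i (a + b) = \<theta>i a + \<theta>i b" by (rule \<theta>_inj) (simp add: \<theta>_props)
lemma \<theta>i_mult: "\<theta>i (a * b) = \<theta>i a * \<theta>i b" by (rule \<theta>_inj) (simp add: \<theta>_props)
lemma \<theta>i_0[simp]: "\<theta>i 0 = 0" by (rule \<theta>_inj) simp
lemma \<theta>i_1[simp]: "\<theta>i 1 = 1" by (rule \<theta>_inj) (simp add: \<theta>_props)
lemma \<theta>i_\<iota>[simp]: "\<theta>i (\<iota> c) = \<iota> c" by (rule \<theta>_inj) (simp add: \<theta>_props)

lemma rel_eqv: "fa_diff x y \<in> gwa_rels \<iota> \<theta> z0 z1 \<Longrightarrow> x \<in> FA \<Longrightarrow> y \<in> FA \<Longrightarrow> x \<approx> y"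
  unfolding eqv_def using I_rel fa_diff_eq by metis

lemma r_add: "mon [GH (a + b)] \<approx> mon [GH a] + mon [GH b]"
  by (rule rel_eqv) (auto simp: gwa_rels_def fa_gen_eq fa_add_eq)
lemma r_mul: "mon [GH (a * b)] \<approx> mon [GH a, GH b]"
proof -
  have "mon [GH (a * b)] \<approx> mon [GH a] \<odot> mon [GH b]"
    by (rule rel_eqv) (auto simp: gwa_rels_def fa_gen_eq)
  then show ?thesis by (simp add: mon_mult)
qed
lemma r_sc: "mon [GH (\<iota> c * a)] \<approx> smul c (mon [GH a])"
proof -
  have "mon [GH (\<iota> c * a)] \<approx> fa_scal c \<odot> mon [GH a]"
    by (rule rel_eqv) (auto simp: gwa_rels_def fa_gen_eq)
  then show ?thesis by (simp add: scal_mult)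
qed
lemma r_one: "mon [GH 1] \<approx> mon []"
proof -
  have "mon [GH 1] \<approx> fa_scal 1" by (rule rel_eqv) (auto simp: gwa_rels_def fa_gen_eq)
  then show ?thesis by (simp add: fa_scal_eq smul_def)
qed
lemma r_uh: "mon [GU, GH h] \<approx> mon [GH (\<theta> h), GU]"
proof -
  have "mon [GU] \<odot> mon [GH h] \<approx> mon [GH (\<theta> h)] \<odot> mon [GU]"
    by (rule rel_eqv) (auto simp: gwa_rels_def fa_gen_eq)
  then show ?thesis by (simp add: mon_mult)
qed
lemma r_hd: "mon [GH h, GD] \<approx> mon [GD, GH (\<theta> h)]"
proof -
  have "mon [GH h] \<odot> mon [GD] \<approx> mon [GD] \<odot> mon [GH (\<theta> h)]"
    by (rule rel_eqv) (auto simp: gwa_rels_def fa_gen_eq)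
  then show ?thesis by (simp add: mon_mult)
qed
lemma r_ud: "mon [GU, GD] \<approx> mon [GH z0] + mon [GD, GH z1, GU]"
proof -
  have "mon [GU] \<odot> mon [GD] \<approx> mon [GH z0] + mon [GD] \<odot> mon [GH z1] \<odot> mon [GU]"
    by (rule rel_eqv) (auto simp: gwa_rels_def fa_gen_eq fa_add_eq)
  then show ?thesis by (simp add: mon_mult)
qed

lemma ctx: "mon x \<approx> y \<Longrightarrow> mon (u @ x @ w) \<approx> mon u \<odot> y \<odot> mon w"
proof -
  assume "mon x \<approx> y"
  then have "mon u \<odot> mon x \<odot> mon w \<approx> mon u \<odot> y \<odot> mon w"
    by (intro eqv_mult eqv_refl) auto
  then show ?thesis by (simp add: mon_mult)
qed

lemma ctx_add: "mon u \<odot> (A + B) \<odot> mon w = mon u \<odot> A \<odot> mon w + mon u \<odot> B \<odot> mon w"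
  by (simp add: mult_add_left mult_add_right)

lemma c_add: "mon (u @ GH (a + b) # w) \<approx> mon (u @ GH a # w) + mon (u @ GH b # w)"
  using ctx[OF r_add, where u=u and w=w] by (simp add: ctx_add mon_mult)
lemma c_mul: "mon (u @ GH a # GH b # w) \<approx> mon (u @ GH (a * b) # w)"
  using ctx[OF r_mul, where u=u and w=w] by (simp add: mon_mult eqv_sym)
lemma c_sc: "smul c (mon (u @ GH a # w)) \<approx> mon (u @ GH (\<iota> c * a) # w)"
  using ctx[OF r_sc, where u=u and w=w] by (simp add: mon_mult eqv_sym mult_smul_left mult_smul_right)
lemma c_one: "mon (u @ GH 1 # w) \<approx> mon (u @ w)"
  using ctx[OF r_one, where u=u and w=w] by (simp add: mon_mult)
lemma c_uh: "mon (u @ GU # GH h # w) \<approx> mon (u @ GH (\<theta> h) # GU # w)"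
  using ctx[OF r_uh, where u=u and w=w] by (simp add: mon_mult)
lemma c_dh: "mon (u @ GD # GH x # w) \<approx> mon (u @ GH (\<theta>i x) # GD # w)"
  using ctx[OF r_hd[of "\<theta>i x"], where u=u and w=w] by (simp add: mon_mult eqv_sym)
lemma c_ud: "mon (u @ GU # GD # w) \<approx> mon (u @ GH z0 # w) + mon (u @ GD # GH z1 # GU # w)"
  using ctx[OF r_ud, where u=u and w=w] by (simp add: ctx_add mon_mult)
lemma c_zero: "mon (u @ GH 0 # w) \<approx> 0"
proof -
  let ?X = "mon (u @ GH 0 # w) :: ('f,'h) fa"
  have "?X \<approx> ?X + ?X" using c_add[of u 0 0 w] by simp
  then have "?X - (?X + ?X) \<in> I" by (simp add: eqv_def)
  then have "- ?X \<in> I" by simp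
  then have "?X \<in> I" using I_uminus by fastforce
  then show ?thesis by (rule eqv_zeroI)
qed

end

context gw
begin

primrec al :: "nat \<Rightarrow> 'h" where
  "al 0 = 0" | "al (Suc i) = z0 + \<theta>i (z1 * al i)"
primrec ga :: "nat \<Rightarrow> 'h" where
  "ga 0 = 1" | "ga (Suc i) = \<theta>i (z1 * ga i)"

lemma c_dmul: "mon (u @ GD # GH z1 # GH a # v) \<approx> mon (u @ GH (\<theta>i (z1 * a)) # GD # v)"
proof -
  have "mon ((u @ [GD]) @ GH z1 # GH a # v) \<approx> mon ((u @ [GD]) @ GH (z1 * a) # v)" by (rule c_mul)
  also have "mon ((u @ [GD]) @ GH (z1 * a) # v) = mon (u @ GD # GH (z1 * a) # v)" by simp
  also have "\<dots> \<approx> mon (u @ GH (\<theta>i (z1 * a)) # GD # v)" by (rule c_dh)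
  finally show ?thesis by simp
qed

lemma UD: "mon (u @ GU # replicate i GD @ w) \<approx>
  mon (u @ GH (al i) # replicate (i - 1) GD @ w) + mon (u @ GH (ga i) # replicate i GD @ GU # w)"
proof (induction i arbitrary: u w)
  case 0
  have X: "mon (u @ GH 0 # w) + mon (u @ GH 1 # GU # w) \<approx> mon (u @ GU # w)"
    using eqv_add[OF c_zero c_one[of u "GU # w"]] by (simp only: add_0_left)
  have "mon (u @ GU # w) \<approx> mon (u @ GH 0 # w) + mon (u @ GH 1 # GU # w)" by (rule eqv_sym[OF X])
  then show ?case by (simp only: al.simps ga.simps replicate_0 append_Nil diff_0_eq_0)
next
  case (Suc i)
  let ?A = "mon (u @ GH z0 # replicate i GD @ w) :: ('f,'h) fa"
  let ?B = "mon (u @ GH (\<theta>i (z1 * al i)) # GD # replicate (i - 1) GD @ w) :: ('f,'h) fa"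
  let ?C = "mon (u @ GH (\<theta>i (z1 * ga i)) # GD # replicate i GD @ GU # w) :: ('f,'h) fa"
  have T2: "mon (u @ GD # GH z1 # GU # replicate i GD @ w) \<approx> ?B + ?C"
  proof -
    have "mon (u @ GD # GH z1 # GU # replicate i GD @ w) = mon ((u @ [GD, GH z1]) @ GU # replicate i GD @ w)" by simp
    also have "\<dots> \<approx> mon ((u @ [GD, GH z1]) @ GH (al i) # replicate (i - 1) GD @ w) +
        mon ((u @ [GD, GH z1]) @ GH (ga i) # replicate i GD @ GU # w)" by (rule Suc.IH)
    also have "\<dots> = mon (u @ GD # GH z1 # GH (al i) # replicate (i - 1) GD @ w) +
        mon (u @ GD # GH z1 # GH (ga i) # replicate i GD @ GU # w)" by simp
    also have "\<dots> \<approx> ?B + ?C" by (rule eqv_add[OF c_dmul c_dmul])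
    finally show ?thesis .
  qed
  have "mon (u @ GU # replicate (Suc i) GD @ w) = mon (u @ GU # GD # (replicate i GD @ w))" by simp
  also have "\<dots> \<approx> ?A + mon (u @ GD # GH z1 # GU # replicate i GD @ w)" by (rule c_ud)
  also have "\<dots> \<approx> ?A + (?B + ?C)" by (rule eqv_add[OF eqv_refl T2]) simp
  finally have 1: "mon (u @ GU # replicate (Suc i) GD @ w) \<approx> ?A + (?B + ?C)" .
  have 2: "?A + (?B + ?C) \<approx> mon (u @ GH (al (Suc i)) # replicate (Suc i - 1) GD @ w) +
      mon (u @ GH (ga (Suc i)) # replicate (Suc i) GD @ GU # w)"
  proof (cases i)
    case 0
    have "?A + (?B + ?C) \<approx> ?A + (0 + ?C)"
      using 0 by (intro eqv_add eqv_refl) (simp_all add: c_zero)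
    then show ?thesis using 0 by simp
  next
    case (Suc n)
    have "?A + ?B \<approx> mon (u @ GH (z0 + \<theta>i (z1 * al i)) # replicate i GD @ w)"
      using Suc eqv_sym[OF c_add[of u z0 "\<theta>i (z1 * al i)" "replicate i GD @ w"]] by simp
    then have "(?A + ?B) + ?C \<approx> mon (u @ GH (z0 + \<theta>i (z1 * al i)) # replicate i GD @ w) + ?C"
      by (intro eqv_add eqv_refl) simp_all
    then show ?thesis by (simp add: add.assoc)
  qed
  show ?case using eqv_trans[OF 1 2] .
qed

end

definition nfw :: "nat \<Rightarrow> nat \<Rightarrow> 'h gsym list" where
  "nfw i j = replicate i GD @ replicate j GU"

definition nf :: "'h \<Rightarrow> nat \<Rightarrow> nat \<Rightarrow> ('f::field, 'h) fa" where
  "nf h i j = mon (GH h # nfw i j)"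

definition nfe :: "'h \<times> nat \<times> nat \<Rightarrow> ('f::field, 'h) fa" where
  "nfe e = (case e of (h, i, j) \<Rightarrow> nf h i j)"

definition SL :: "('h \<times> nat \<times> nat) list \<Rightarrow> ('f::field, 'h) fa" where
  "SL L = sum_list (map nfe L)"

lemma FA_nf[simp]: "nf h i j \<in> FA" by (simp add: nf_def)
lemma FA_nfe[simp]: "nfe e \<in> FA" by (simp add: nfe_def split: prod.split)
lemma FA_SL[simp]: "SL L \<in> FA" by (simp add: SL_def)
lemma SL_Nil[simp]: "SL [] = 0" by (simp add: SL_def)
lemma SL_Cons: "SL (e # L) = nfe e + SL L" by (simp add: SL_def)
lemma SL_single: "SL [e] = nfe e" by (simp add: SL_def)
lemma SL_append: "SL (A @ B) = SL A + SL B" by (simp add: SL_def)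
lemma SL_concat: "SL (concat (map f L)) = sum_list (map (\<lambda>e. SL (f e)) L)"
  by (induction L) (simp_all add: SL_append)

context gw
begin

lemma eqv_sum_list: "(\<And>e. e \<in> set L \<Longrightarrow> f e \<approx> g e) \<Longrightarrow> sum_list (map f L) \<approx> sum_list (map g L)"
proof (induction L)
  case Nil show ?case by (simp only: list.map sum_list.Nil) (rule eqv_refl[OF FA_zero])
next
  case (Cons a L)
  have "f a + sum_list (map f L) \<approx> g a + sum_list (map g L)"
    using Cons by (intro eqv_add) auto
  then show ?case by (simp only: list.map sum_list.Cons)
qed

fun stepL :: "'h gsym \<Rightarrow> 'h \<times> nat \<times> nat \<Rightarrow> ('h \<times> nat \<times> nat) list" where
  "stepL (GH g) (h, i, j) = [(g * h, i, j)]"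
| "stepL GD (h, i, j) = [(\<theta>i h, Suc i, j)]"
| "stepL GU (h, i, j) = [(\<theta> h * al i, i - 1, j), (\<theta> h * ga i, i, Suc j)]"

lemma step: "mon (x # GH h # nfw i j) \<approx> SL (stepL x (h, i, j))"
proof (cases x)
  case (GH g)
  have "mon ([] @ GH g # GH h # nfw i j) \<approx> mon ([] @ GH (g * h) # nfw i j)" by (rule c_mul)
  then show ?thesis using GH by (simp add: SL_single nfe_def nf_def)
next
  case GD
  have "mon ([] @ GD # GH h # nfw i j) \<approx> mon ([] @ GH (\<theta>i h) # GD # nfw i j)" by (rule c_dh)
  then show ?thesis using GD by (simp add: SL_single nfe_def nf_def nfw_def)
next
  case GU
  have "mon (x # GH h # nfw i j) = mon ([] @ GU # GH h # nfw i j)" using GU by simp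
  also have "\<dots> \<approx> mon ([] @ GH (\<theta> h) # GU # nfw i j)" by (rule c_uh)
  also have "\<dots> = mon ([GH (\<theta> h)] @ GU # replicate i GD @ replicate j GU)" by (simp add: nfw_def)
  also have "\<dots> \<approx> mon ([GH (\<theta> h)] @ GH (al i) # replicate (i - 1) GD @ replicate j GU) +
      mon ([GH (\<theta> h)] @ GH (ga i) # replicate i GD @ GU # replicate j GU)" by (rule UD)
  also have "\<dots> = mon ([] @ GH (\<theta> h) # GH (al i) # nfw (i - 1) j) +
      mon ([] @ GH (\<theta> h) # GH (ga i) # nfw i (Suc j))" by (simp add: nfw_def replicate_append_same)
  also have "\<dots> \<approx> mon ([] @ GH (\<theta> h * al i) # nfw (i - 1) j) + mon ([] @ GH (\<theta> h * ga i) # nfw i (Suc j))"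
    by (rule eqv_add[OF c_mul c_mul])
  also have "\<dots> = SL (stepL x (h, i, j))" using GU by (simp add: SL_def nfe_def nf_def)
  finally show ?thesis .
qed

fun nword :: "'h gsym list \<Rightarrow> ('h \<times> nat \<times> nat) list" where
  "nword [] = [(1, 0, 0)]"
| "nword (x # w) = concat (map (stepL x) (nword w))"

lemma mon_norm: "mon w \<approx> SL (nword w)"
proof (induction w)
  case Nil
  have "mon [] \<approx> mon [GH 1]" by (rule eqv_sym[OF r_one])
  then show ?case by (simp add: SL_single nfe_def nf_def nfw_def)
next
  case (Cons x w)
  have "mon (x # w) = mon [x] \<odot> mon w" by (simp add: mon_mult)
  also have "\<dots> \<approx> mon [x] \<odot> SL (nword w)" by (rule eqv_mult[OF eqv_refl Cons.IH]) simp
  also have "\<dots> = sum_list (map (\<lambda>e. mon [x] \<odot> nfe e) (nword w))"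
    by (simp only: SL_def mult_sum_list_right)
  also have "\<dots> \<approx> sum_list (map (\<lambda>e. SL (stepL x e)) (nword w))"
  proof (rule eqv_sum_list)
    fix e :: "'h \<times> nat \<times> nat" obtain h i j where e: "e = (h, i, j)" by (cases e) auto
    have 1: "mon [x] \<odot> nfe e = mon (x # GH h # nfw i j)" by (simp add: e nfe_def nf_def mon_mult)
    show "mon [x] \<odot> nfe e \<approx> SL (stepL x e)" unfolding 1 unfolding e by (rule step)
  qed
  also have "\<dots> = SL (nword (x # w))" by (simp add: SL_concat)
  finally show ?case .
qed

definition scL :: "'f \<Rightarrow> ('h \<times> nat \<times> nat) list \<Rightarrow> ('h \<times> nat \<times> nat) list" where
  "scL c L = map (\<lambda>(h, i, j). (\<iota> c * h, i, j)) L"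

lemma smul_SL: "smul c (SL L) \<approx> SL (scL c L)"
proof -
  have "smul c (SL L) = sum_list (map (\<lambda>e. smul c (nfe e)) L)" by (simp only: SL_def smul_sum_list)
  also have "\<dots> \<approx> sum_list (map (\<lambda>e. nfe (case e of (h, i, j) \<Rightarrow> (\<iota> c * h, i, j))) L)"
  proof (rule eqv_sum_list)
    fix e :: "'h \<times> nat \<times> nat" obtain h i j where e: "e = (h, i, j)" by (cases e) auto
    show "smul c (nfe e) \<approx> nfe (case e of (h, i, j) \<Rightarrow> (\<iota> c * h, i, j))"
      using c_sc[of c "[]" h "nfw i j"] by (simp add: e nfe_def nf_def)
  qed
  also have "\<dots> = SL (scL c L)" by (simp add: SL_def scL_def comp_def)
  finally show ?thesis .
qed

lemma norm_sum: "finite A \<Longrightarrow> \<exists>L. (\<Sum>w\<in>A. smul (p w) (mon w)) \<approx> SL L"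
proof (induction A rule: finite_induct)
  case empty then show ?case by (intro exI[of _ "[]"]) (simp add: eqv_refl)
next
  case (insert x F)
  then obtain L where L: "(\<Sum>w\<in>F. smul (p w) (mon w)) \<approx> SL L" by blast
  have "smul (p x) (mon x) \<approx> smul (p x) (SL (nword x))" by (rule eqv_smul[OF mon_norm])
  also have "\<dots> \<approx> SL (scL (p x) (nword x))" by (rule smul_SL)
  finally have "smul (p x) (mon x) + (\<Sum>w\<in>F. smul (p w) (mon w)) \<approx> SL (scL (p x) (nword x)) + SL L"
    using L by (rule eqv_add)
  then show ?case by (intro exI[of _ "scL (p x) (nword x) @ L"]) (simp only: SL_append sum.insert[OF insert(1,2)])
qed

lemma norm: "p \<in> FA \<Longrightarrow> \<exists>L. p \<approx> SL L"
proof -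
  assume p: "p \<in> FA"
  then obtain L where "(\<Sum>w\<in>{w. p w \<noteq> 0}. smul (p w) (mon w)) \<approx> SL L"
    using norm_sum[of "{w. p w \<noteq> 0}" p] by (auto simp: FA_def)
  then show ?thesis using expand[OF p] by metis
qed

end

type_synonym 'h vec = "nat \<times> nat \<Rightarrow> 'h"

lemma fun_zero_eta: "(\<lambda>a. 0) = 0" by (simp add: fun_eq_iff)
lemma fun_plus_eta: "(\<lambda>a. f a + g a) = f + g" by (simp add: fun_eq_iff)
lemmas eta_simps = fun_zero_eta fun_plus_eta

context gw
begin

definition scv :: "'f \<Rightarrow> 'h vec \<Rightarrow> 'h vec" where "scv c v = (\<lambda>y. \<iota> c * v y)"
definition Lop :: "'h \<Rightarrow> 'h vec \<Rightarrow> 'h vec" where "Lop h v = (\<lambda>y. h * v y)"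
definition Dop :: "'h vec \<Rightarrow> 'h vec" where
  "Dop v = (\<lambda>(a, b). if a = 0 then 0 else \<theta>i (v (a - 1, b)))"
definition Uop :: "'h vec \<Rightarrow> 'h vec" where
  "Uop v = (\<lambda>(a, b). \<theta> (v (Suc a, b)) * al (Suc a) + (if b = 0 then 0 else \<theta> (v (a, b - 1)) * ga a))"

fun opg :: "'h gsym \<Rightarrow> 'h vec \<Rightarrow> 'h vec" where
  "opg (GH h) = Lop h" | "opg GD = Dop" | "opg GU = Uop"

fun evw :: "'h gsym list \<Rightarrow> 'h vec \<Rightarrow> 'h vec" where
  "evw [] v = v" | "evw (x # w) v = opg x (evw w v)"

definition ev :: "('f, 'h) fa \<Rightarrow> 'h vec \<Rightarrow> 'h vec" where
  "ev p v = (\<Sum>w | p w \<noteq> 0. scv (p w) (evw w v))"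

lemma \<iota>_add: "\<iota> (a + b) = \<iota> a + \<iota> b" by (rule \<iota>_props(2))
lemma \<iota>_mult: "\<iota> (a * b) = \<iota> a * \<iota> b" by (rule \<iota>_props(3))
lemma \<iota>_1[simp]: "\<iota> 1 = 1" by (rule \<iota>_props(1))
lemma \<iota>_uminus: "\<iota> (- a) = - \<iota> a"
proof -
  have "\<iota> a + \<iota> (-a) = 0" using \<iota>_add[of a "-a"] by simp
  then show ?thesis by (simp add: add_eq_0_iff)
qed
lemma \<theta>_add: "\<theta> (a + b) = \<theta> a + \<theta> b" by (rule \<theta>_props(3))
lemma \<theta>_mult: "\<theta> (a * b) = \<theta> a * \<theta> b" by (rule \<theta>_props(4))
lemma \<theta>_\<iota>[simp]: "\<theta> (\<iota> c) = \<iota> c" by (rule \<theta>_props(5))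
lemma \<theta>_1[simp]: "\<theta> 1 = 1" by (rule \<theta>_props(2))

lemma scv_add_vec: "scv c (v + w) = scv c v + scv c w" by (simp add: scv_def fun_eq_iff distrib_left)
lemma scv_add: "scv (a + b) v = scv a v + scv b v" by (simp add: scv_def fun_eq_iff \<iota>_add distrib_right)
lemma scv_scv: "scv a (scv b v) = scv (a * b) v" by (simp add: scv_def \<iota>_mult mult.assoc)
lemma scv_0[simp]: "scv 0 v = 0" by (simp add: scv_def fun_eq_iff)
lemma scv_1[simp]: "scv 1 v = v" by (simp add: scv_def fun_eq_iff)
lemma scv_zero[simp]: "scv c 0 = 0" by (simp add: scv_def fun_eq_iff)
lemma scv_sum: "scv c (\<Sum>a\<in>A. f a) = (\<Sum>a\<in>A. scv c (f a))"
  by (simp add: scv_def fun_eq_iff sum_fun_apply sum_distrib_left)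
lemma scv_uminus: "scv (- a) v = - scv a v" by (simp add: scv_def fun_eq_iff \<iota>_uminus)

lemma opg_add: "opg x (v + w) = opg x v + opg x w"
  by (cases x) (auto simp: Lop_def Dop_def Uop_def fun_eq_iff distrib_left distrib_right \<theta>_add \<theta>i_add)
lemma opg_scv: "opg x (scv c v) = scv c (opg x v)"
  by (cases x) (auto simp: Lop_def Dop_def Uop_def scv_def fun_eq_iff distrib_left \<theta>_mult \<theta>i_mult mult.left_commute mult.assoc)
lemma opg_zero[simp]: "opg x 0 = 0"
  by (cases x) (auto simp: Lop_def Dop_def Uop_def fun_eq_iff)

lemma evw_add: "evw w (v + v') = evw w v + evw w v'"
  by (rule list.induct[of "\<lambda>w. evw w (v + v') = evw w v + evw w v'" w]) (simp_all add: opg_add)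
lemma evw_scv: "evw w (scv c v) = scv c (evw w v)"
  by (rule list.induct[of "\<lambda>w. evw w (scv c v) = scv c (evw w v)" w]) (simp_all add: opg_scv)
lemma evw_zero[simp]: "evw w 0 = 0"
  by (rule list.induct[of "\<lambda>w. evw w 0 = 0" w]) simp_all
lemma evw_sum: "evw w (\<Sum>a\<in>A. f a) = (\<Sum>a\<in>A. evw w (f a))"
  by (rule infinite_finite_induct[of "\<lambda>A. evw w (\<Sum>a\<in>A. f a) = (\<Sum>a\<in>A. evw w (f a))" A]) (simp_all add: evw_add)
lemma evw_append: "evw (a @ b) v = evw a (evw b v)"
  by (induction a) simp_all

lemma ev_sup: "finite S \<Longrightarrow> {w. p w \<noteq> 0} \<subseteq> S \<Longrightarrow> ev p v = (\<Sum>w\<in>S. scv (p w) (evw w v))"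
  unfolding ev_def by (rule sum.mono_neutral_left) auto

lemma ev_add: assumes "p \<in> FA" "q \<in> FA" shows "ev (p + q) v = ev p v + ev q v"
proof -
  let ?S = "{w. p w \<noteq> 0} \<union> {w. q w \<noteq> 0}"
  have f: "finite ?S" using assms by (simp add: FA_def)
  have "ev (p + q) v = (\<Sum>w\<in>?S. scv ((p + q) w) (evw w v))" by (rule ev_sup[OF f]) auto
  also have "\<dots> = (\<Sum>w\<in>?S. scv (p w) (evw w v)) + (\<Sum>w\<in>?S. scv (q w) (evw w v))"
    by (simp add: scv_add sum.distrib)
  also have "\<dots> = ev p v + ev q v" by (simp add: ev_sup[OF f])
  finally show ?thesis .
qed

lemma fun_uminus_apply: "(- p) w = - (p w :: 'a::uminus)" by (simp add: fun_Compl_def)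

lemma ev_uminus: assumes "p \<in> FA" shows "ev (- p) v = - ev p v"
proof -
  have f: "finite {w. p w \<noteq> 0}" using assms by (simp add: FA_def)
  have "ev (- p) v = (\<Sum>w\<in>{w. p w \<noteq> 0}. scv ((- p) w) (evw w v))"
    by (rule ev_sup[OF f]) (auto simp: fun_uminus_apply)
  also have "\<dots> = (\<Sum>w\<in>{w. p w \<noteq> 0}. - scv (p w) (evw w v))"
    by (rule sum.cong) (simp_all only: fun_uminus_apply scv_uminus)
  also have "\<dots> = - ev p v" by (simp only: sum_negf ev_def)
  finally show ?thesis .
qed

lemma ev_diff: assumes "p \<in> FA" "q \<in> FA" shows "ev (p - q) v = ev p v - ev q v"
proof -
  have "ev (p - q) v = ev (p + - q) v" by (simp only: diff_conv_add_uminus)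
  also have "\<dots> = ev p v + ev (- q) v" using assms by (intro ev_add) simp_all
  also have "\<dots> = ev p v - ev q v" using ev_uminus[OF assms(2)] by (simp only: diff_conv_add_uminus)
  finally show ?thesis .
qed

lemma ev_smul: assumes "p \<in> FA" shows "ev (smul c p) v = scv c (ev p v)"
proof -
  have f: "finite {w. p w \<noteq> 0}" using assms by (simp add: FA_def)
  have "ev (smul c p) v = (\<Sum>w\<in>{w. p w \<noteq> 0}. scv (smul c p w) (evw w v))"
    by (rule ev_sup[OF f]) (auto simp: smul_def)
  also have "\<dots> = scv c (ev p v)" by (simp add: ev_def scv_sum scv_scv smul_def)
  finally show ?thesis .
qed

lemma ev_mon: "ev (mon w) v = evw w v"
proof -
  have "ev (mon w) v = (\<Sum>w'\<in>{w}. scv (mon w w') (evw w' v))" by (rule ev_sup) (auto simp: mon_def)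
  then show ?thesis by (simp add: mon_def)
qed

lemma ev_zero[simp]: "ev 0 v = 0" by (simp add: ev_def)

lemma ev_sum: assumes "\<And>a. a \<in> A \<Longrightarrow> f a \<in> FA" shows "ev (\<Sum>a\<in>A. f a) v = (\<Sum>a\<in>A. ev (f a) v)"
proof -
  have "(\<forall>a\<in>A. f a \<in> FA) \<longrightarrow> ev (\<Sum>a\<in>A. f a) v = (\<Sum>a\<in>A. ev (f a) v)"
  proof (rule infinite_finite_induct[of "\<lambda>A. (\<forall>a\<in>A. f a \<in> FA) \<longrightarrow> ev (\<Sum>a\<in>A. f a) v = (\<Sum>a\<in>A. ev (f a) v)" A])
    fix B :: "'a set" assume "infinite B"
    then show "(\<forall>a\<in>B. f a \<in> FA) \<longrightarrow> ev (\<Sum>a\<in>B. f a) v = (\<Sum>a\<in>B. ev (f a) v)" by simp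
  next
    show "(\<forall>a\<in>{}. f a \<in> FA) \<longrightarrow> ev (\<Sum>a\<in>{}. f a) v = (\<Sum>a\<in>{}. ev (f a) v)" by simp
  next
    fix x F assume F: "finite F" "x \<notin> F"
      and IH: "(\<forall>a\<in>F. f a \<in> FA) \<longrightarrow> ev (\<Sum>a\<in>F. f a) v = (\<Sum>a\<in>F. ev (f a) v)"
    show "(\<forall>a\<in>insert x F. f a \<in> FA) \<longrightarrow> ev (\<Sum>a\<in>insert x F. f a) v = (\<Sum>a\<in>insert x F. ev (f a) v)"
    proof
      assume a: "\<forall>a\<in>insert x F. f a \<in> FA"
      have "ev (f x + sum f F) v = ev (f x) v + ev (sum f F) v" using a by (intro ev_add) auto
      then show "ev (\<Sum>a\<in>insert x F. f a) v = (\<Sum>a\<in>insert x F. ev (f a) v)" using IH a F by simp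
    qed
  qed
  then show ?thesis using assms by blast
qed

lemma ev_vec_zero: "ev p 0 = 0" by (simp add: ev_def)

lemma ev_vec_sum: "ev p (\<Sum>a\<in>A. f a) = (\<Sum>a\<in>A. ev p (f a))"
  unfolding ev_def by (simp add: evw_sum scv_sum) (rule sum.swap)

lemma ev_vec_scv: "ev p (scv c v) = scv c (ev p v)"
  unfolding ev_def by (simp add: evw_scv scv_sum scv_scv mult.commute)

lemma ev_mult: assumes "p \<in> FA" "q \<in> FA" shows "ev (p \<odot> q) v = ev p (ev q v)"
proof -
  let ?P = "{w. p w \<noteq> 0}" and ?Q = "{w. q w \<noteq> 0}"
  have "p \<odot> q = (\<Sum>b\<in>?Q. \<Sum>a\<in>?P. smul (q b * p a) (mon (a @ b)))"
  proof -
    have "(\<Sum>a\<in>?P. smul (p a) (mon a)) \<odot> (\<Sum>b\<in>?Q. smul (q b) (mon b)) =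
      (\<Sum>b\<in>?Q. \<Sum>a\<in>?P. smul (q b * p a) (mon (a @ b)))"
      by (simp add: mult_sum_left mult_sum_right mult_smul_left mult_smul_right mon_mult smul_sum smul_smul)
    then show ?thesis by (simp only: expand[OF assms(1), symmetric] expand[OF assms(2), symmetric])
  qed
  then have "ev (p \<odot> q) v = (\<Sum>b\<in>?Q. \<Sum>a\<in>?P. ev (smul (q b * p a) (mon (a @ b))) v)"
    by (simp add: ev_sum)
  also have "\<dots> = (\<Sum>b\<in>?Q. \<Sum>a\<in>?P. scv (q b * p a) (evw a (evw b v)))"
    by (simp add: ev_smul ev_mon evw_append)
  also have "\<dots> = (\<Sum>a\<in>?P. \<Sum>b\<in>?Q. scv (p a) (scv (q b) (evw a (evw b v))))"
    by (subst sum.swap) (simp add: scv_scv mult.commute)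
  also have "\<dots> = ev p (ev q v)"
    by (simp add: ev_def evw_sum evw_scv scv_sum)
  finally show ?thesis .
qed

end

context gw
begin

lemma O1: "Lop (a + b) v = Lop a v + Lop b v" by (simp add: Lop_def fun_eq_iff distrib_right)
lemma O2: "Lop (a * b) v = Lop a (Lop b v)" by (simp add: Lop_def mult.assoc)
lemma O3: "Lop (\<iota> c) v = scv c v" by (simp add: Lop_def scv_def)
lemma ev_scal: "ev (fa_scal c) v = scv c v" by (simp add: fa_scal_eq ev_smul ev_mon)
lemma O4: "Lop 1 v = v" by (simp add: Lop_def)
lemma O5: "Uop (Lop h v) = Lop (\<theta> h) (Uop v)"
  by (auto simp: Uop_def Lop_def fun_eq_iff \<theta>_mult distrib_left mult.assoc)
lemma O6: "Lop h (Dop v) = Dop (Lop (\<theta> h) v)"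
  by (auto simp: Dop_def Lop_def fun_eq_iff \<theta>i_mult)
lemma O7: "Uop (Dop v) = Lop z0 v + Dop (Lop z1 (Uop v))"
proof (rule ext, clarify)
  fix a b
  show "Uop (Dop v) (a, b) = (Lop z0 v + Dop (Lop z1 (Uop v))) (a, b)"
  proof (cases a)
    case 0 then show ?thesis by (simp add: Uop_def Dop_def Lop_def)
  next
    case (Suc n)
    then show ?thesis
      by (simp add: Uop_def Dop_def Lop_def \<theta>i_mult \<theta>i_add distrib_left distrib_right algebra_simps)
  qed
qed

lemma rel_ev: "r \<in> gwa_rels \<iota> \<theta> z0 z1 \<Longrightarrow> ev r v = 0"
  unfolding gwa_rels_def
  by (auto simp: fa_gen_eq fa_diff_eq fa_add_eq mon_mult scal_mult ev_scal ev_diff ev_add ev_smul ev_mon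
      O1 O2 O3 O4 O5 O6 O7)

lemma I_ker: assumes "x \<in> I" shows "ev x v = 0"
proof -
  have "x \<in> ideal_gen (gwa_rels \<iota> \<theta> z0 z1)" using assms by (simp add: gwa_ideal_def)
  then have "\<forall>v. ev x v = 0"
  proof (rule ideal_gen.induct[where P = "\<lambda>x. \<forall>v. ev x v = 0"])
    fix r assume "r \<in> gwa_rels \<iota> \<theta> z0 z1" then show "\<forall>v. ev r v = 0" using rel_ev by blast
  next
    show "\<forall>v. ev fa_zero v = 0" by (simp add: fa_zero_eq)
  next
    fix x y assume "x \<in> ideal_gen (gwa_rels \<iota> \<theta> z0 z1)" "\<forall>v. ev x v = 0"
      "y \<in> ideal_gen (gwa_rels \<iota> \<theta> z0 z1)" "\<forall>v. ev y v = 0"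
    then show "\<forall>v. ev (fa_add x y) v = 0"
      using I_FA unfolding gwa_ideal_def by (simp add: fa_add_eq ev_add)
  next
    fix a x :: "('f, 'h) fa" assume "a \<in> FA" "x \<in> ideal_gen (gwa_rels \<iota> \<theta> z0 z1)" "\<forall>v. ev x v = 0"
    then show "\<forall>v. ev (a \<odot> x) v = 0"
      using I_FA unfolding gwa_ideal_def by (simp add: ev_mult ev_vec_zero)
  next
    fix a x :: "('f, 'h) fa" assume "a \<in> FA" "x \<in> ideal_gen (gwa_rels \<iota> \<theta> z0 z1)" "\<forall>v. ev x v = 0"
    then show "\<forall>v. ev (x \<odot> a) v = 0"
      using I_FA unfolding gwa_ideal_def by (simp add: ev_mult)
  qed
  then show ?thesis by blast
qed

lemma ev_eqv: assumes "x \<approx> y" shows "ev x v = ev y v"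
proof -
  have "ev (x - y) v = 0" using assms I_ker by (simp add: eqv_def)
  then show ?thesis using assms ev_diff[of x y v] by (simp add: eqv_def)
qed

end

definition ee :: "nat \<Rightarrow> nat \<Rightarrow> 'h::comm_ring_1 vec" where
  "ee a b = (\<lambda>y. if y = (a, b) then 1 else 0)"

context gw
begin

definition T :: "('f, 'h) fa \<Rightarrow> 'h vec" where "T p = ev p (ee 0 0)"

lemma Uop_ee0: "Uop (ee 0 b) = ee 0 (Suc b)"
  by (auto simp: Uop_def ee_def fun_eq_iff)
lemma Dop_ee: "Dop (ee a b) = ee (Suc a) b"
  by (auto simp: Dop_def ee_def fun_eq_iff)
lemma Upow_ee0: "(Uop ^^ j) (ee 0 b) = ee 0 (b + j)"
  by (induction j) (simp_all add: Uop_ee0)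
lemma Dpow_ee: "(Dop ^^ i) (ee a b) = ee (a + i) b"
  by (induction i) (simp_all add: Dop_ee)
lemma evw_rep: "evw (replicate i x) v = (opg x ^^ i) v"
  by (induction i) simp_all
lemma ev_nf: "ev (nf h i j) v = Lop h ((Dop ^^ i) ((Uop ^^ j) v))"
  by (simp add: nf_def ev_mon nfw_def evw_append evw_rep)
lemma T_nf: "T (nf h i j) = (\<lambda>y. if y = (i, j) then h else 0)"
proof -
  have "T (nf h i j) = Lop h (ee i j)" by (simp add: T_def ev_nf Upow_ee0 Dpow_ee)
  then show ?thesis by (auto simp: Lop_def ee_def fun_eq_iff)
qed
lemma T_nfe: "T (nfe (h, y)) = (\<lambda>y'. if y' = y then h else 0)"
  by (cases y) (simp add: nfe_def T_nf)
lemma T_add: "p \<in> FA \<Longrightarrow> q \<in> FA \<Longrightarrow> T (p + q) = T p + T q"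
  by (simp add: T_def ev_add)
lemma T_zero[simp]: "T 0 = 0" by (simp add: T_def)
lemma T_eqv: "x \<approx> y \<Longrightarrow> T x = T y" by (simp add: T_def ev_eqv)
lemma T_mult: "p \<in> FA \<Longrightarrow> q \<in> FA \<Longrightarrow> T (p \<odot> q) = ev p (T q)"
  by (simp add: T_def ev_mult)

lemma T_SL: "T (SL L) y = sum_list (map (\<lambda>(h, i, j). if y = (i, j) then h else 0) L)"
proof (rule list.induct[of "\<lambda>L. T (SL L) y = sum_list (map (\<lambda>(h, i, j). if y = (i, j) then h else 0) L)" L])
  show "T (SL []) y = sum_list (map (\<lambda>(h, i, j). if y = (i, j) then h else 0) [])" by simp
next
  fix e :: "'h \<times> nat \<times> nat" and L
  assume IH: "T (SL L) y = sum_list (map (\<lambda>(h, i, j). if y = (i, j) then h else 0) L)"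
  obtain h i j where e: "e = (h, i, j)" by (cases e) auto
  have "T (SL (e # L)) y = T (nfe e) y + T (SL L) y" by (simp add: SL_Cons T_add)
  then show "T (SL (e # L)) y = sum_list (map (\<lambda>(h, i, j). if y = (i, j) then h else 0) (e # L))"
    using IH by (simp add: e nfe_def T_nf)
qed

lemma nfe_add: "nfe (a + b, y) \<approx> nfe (a, y) + nfe (b, y)"
  using c_add[of "[]" a b "nfw (fst y) (snd y)"] by (cases y) (simp add: nfe_def nf_def)
lemma nfe_zero: "nfe (0, y) \<approx> 0"
  using c_zero[of "[]" "nfw (fst y) (snd y)"] by (cases y) (simp add: nfe_def nf_def)

lemma sum_delta_nfe: assumes "finite P" "y0 \<in> P"
  shows "(\<Sum>y\<in>P. nfe (if y = y0 then h else 0, y)) \<approx> nfe (h, y0)"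
proof -
  have "(\<Sum>y\<in>P. nfe (if y = y0 then h else 0, y)) =
    nfe (h, y0) + (\<Sum>y\<in>P - {y0}. nfe (if y = y0 then h else 0, y))"
    using assms by (simp add: sum.remove)
  also have "\<dots> = nfe (h, y0) + (\<Sum>y\<in>P - {y0}. nfe (0, y))"
    by (intro arg_cong2[where f="(+)"] refl sum.cong) auto
  also have "\<dots> \<approx> nfe (h, y0) + 0"
    by (intro eqv_add eqv_refl eqv_sum_zero nfe_zero) simp
  finally show ?thesis by simp
qed

lemma GR: assumes "finite P" shows "(\<forall>e\<in>set L. (fst (snd e), snd (snd e)) \<in> P) \<longrightarrow> SL L \<approx> (\<Sum>y\<in>P. nfe (T (SL L) y, y))"
proof (rule list.induct[of "\<lambda>L. (\<forall>e\<in>set L. (fst (snd e), snd (snd e)) \<in> P) \<longrightarrow> SL L \<approx> (\<Sum>y\<in>P. nfe (T (SL L) y, y))" L])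
  have "(\<Sum>y\<in>P. nfe (T (SL []) y, y)) \<approx> 0" by (simp add: eqv_sum_zero nfe_zero)
  then show "(\<forall>e\<in>set []. (fst (snd e), snd (snd e)) \<in> P) \<longrightarrow> SL [] \<approx> (\<Sum>y\<in>P. nfe (T (SL []) y, y))"
    by (simp add: eqv_sym)
next
  fix e :: "'h \<times> nat \<times> nat" and L
  assume IH: "(\<forall>e\<in>set L. (fst (snd e), snd (snd e)) \<in> P) \<longrightarrow> SL L \<approx> (\<Sum>y\<in>P. nfe (T (SL L) y, y))"
  obtain h i j where e: "e = (h, i, j)" by (cases e) auto
  show "(\<forall>e\<in>set (e # L). (fst (snd e), snd (snd e)) \<in> P) \<longrightarrow> SL (e # L) \<approx> (\<Sum>y\<in>P. nfe (T (SL (e # L)) y, y))"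
  proof
    assume a: "\<forall>e\<in>set (e # L). (fst (snd e), snd (snd e)) \<in> P"
    then have ij: "(i, j) \<in> P" by (simp add: e)
    have TT: "T (SL (e # L)) y = (if y = (i, j) then h else 0) + T (SL L) y" for y
      by (simp add: SL_Cons T_add e T_nfe)
    have "SL (e # L) = nfe (h, i, j) + SL L" by (simp add: SL_Cons e)
    also have "\<dots> \<approx> nfe (h, i, j) + (\<Sum>y\<in>P. nfe (T (SL L) y, y))"
      using IH a by (intro eqv_add eqv_refl) auto
    also have "\<dots> \<approx> (\<Sum>y\<in>P. nfe (if y = (i, j) then h else 0, y)) + (\<Sum>y\<in>P. nfe (T (SL L) y, y))"
      by (intro eqv_add eqv_sym[OF sum_delta_nfe[OF assms ij]] eqv_refl) simp
    also have "\<dots> = (\<Sum>y\<in>P. nfe (if y = (i, j) then h else 0, y) + nfe (T (SL L) y, y))"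
      by (simp add: sum.distrib)
    also have "\<dots> \<approx> (\<Sum>y\<in>P. nfe (T (SL (e # L)) y, y))"
      unfolding TT by (intro eqv_sum eqv_sym[OF nfe_add])
    finally show "SL (e # L) \<approx> (\<Sum>y\<in>P. nfe (T (SL (e # L)) y, y))" .
  qed
qed

lemma DEC: assumes p: "p \<in> FA" and P: "finite P" and z: "\<And>y. y \<notin> P \<Longrightarrow> T p y = 0"
  shows "p \<approx> (\<Sum>y\<in>P. nfe (T p y, y))"
proof -
  obtain L where L: "p \<approx> SL L" using norm[OF p] by blast
  have TL: "T (SL L) = T p" using T_eqv[OF L] by simp
  let ?Q = "(\<lambda>e. (fst (snd e), snd (snd e))) ` set L"
  let ?P' = "P \<union> ?Q"
  have f: "finite ?P'" using P by simp
  have "SL L \<approx> (\<Sum>y\<in>?P'. nfe (T (SL L) y, y))" using GR[OF f, of L] by auto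
  also have "\<dots> = (\<Sum>y\<in>?P' - P. nfe (T p y, y)) + (\<Sum>y\<in>P. nfe (T p y, y))"
    unfolding TL by (rule sum.subset_diff) (use f in auto)
  also have "\<dots> \<approx> 0 + (\<Sum>y\<in>P. nfe (T p y, y))"
  proof (intro eqv_add eqv_refl eqv_sum_zero)
    fix y assume "y \<in> ?P' - P"
    then have "T p y = 0" using z by auto
    then show "nfe (T p y, y) \<approx> 0" using nfe_zero by simp
  qed simp
  finally have "SL L \<approx> (\<Sum>y\<in>P. nfe (T p y, y))" by simp
  with L show ?thesis by (rule eqv_trans)
qed

lemma kernel: assumes "p \<in> FA" "T p = 0" shows "p \<in> I"
proof -
  have "p \<approx> (\<Sum>y\<in>{}. nfe (T p y, y))" by (rule DEC) (use assms in auto)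
  then show ?thesis by (simp add: eqv_zeroD)
qed

end

lemma word_deg_append: "word_deg (a @ b) = word_deg a + word_deg b"
proof (induction a)
  case (Cons x a) then show ?case by (cases x) simp_all
qed simp

lemma homog_mult: assumes "p \<in> fa_homog a" "q \<in> fa_homog b" shows "p \<odot> q \<in> fa_homog (a + b)"
proof -
  have "p \<in> FA" "q \<in> FA" using assms by (auto simp: fa_homog_def)
  moreover have "word_deg w = a + b" if "(p \<odot> q) w \<noteq> 0" for w
  proof -
    have "(\<Sum>i\<le>length w. p (take i w) * q (drop i w)) \<noteq> 0" using that by (simp add: fa_mult_def)
    then obtain i where "i \<in> {..length w}" "p (take i w) * q (drop i w) \<noteq> 0"
      by (rule sum.not_neutral_contains_not_neutral)
    then have "p (take i w) \<noteq> 0" "q (drop i w) \<noteq> 0" by auto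
    then have "word_deg (take i w) = a" "word_deg (drop i w) = b" using assms by (auto simp: fa_homog_def)
    then show ?thesis using word_deg_append[of "take i w" "drop i w"] by simp
  qed
  ultimately show ?thesis by (simp add: fa_homog_def)
qed

lemma homog_add: assumes "p \<in> fa_homog a" "q \<in> fa_homog a" shows "p + q \<in> fa_homog a"
proof -
  have "word_deg w = a" if "(p + q) w \<noteq> 0" for w
  proof (cases "p w = 0")
    case True then have "q w \<noteq> 0" using that by simp
    then show ?thesis using assms by (simp add: fa_homog_def)
  next
    case False then show ?thesis using assms by (simp add: fa_homog_def)
  qed
  then show ?thesis using assms by (simp add: fa_homog_def)
qed

lemma homog_mon: "mon w \<in> fa_homog (word_deg w)"
  using FA_mon[of w] by (auto simp: fa_homog_def mon_def)

lemma homog_scal: "fa_scal c \<in> fa_homog 0"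
  using FA_scal[of c] by (auto simp: fa_homog_def fa_scal_def)

abbreviation Gs :: "('f::field, 'h) fa set" where
  "Gs \<equiv> {fa_gen (GH h) | h. True} \<union> {fa_mult (fa_gen GD) (fa_gen GU)}"
abbreviation Sub :: "('f::field, 'h) fa set" where "Sub \<equiv> fa_subalg Gs"

lemma Sub_homog: fixes x :: "('f::field, 'h) fa" assumes "x \<in> Sub" shows "x \<in> fa_homog 0"
proof (rule fa_subalg.induct[where P = "\<lambda>x. x \<in> fa_homog 0", OF assms])
  fix g :: "('f, 'h) fa" assume "g \<in> Gs"
  then show "g \<in> fa_homog 0" using homog_mon[of "[GH _]"] homog_mon[of "[GD, GU]"]
    by (auto simp: fa_gen_eq mon_mult)
next
  fix c show "fa_scal c \<in> fa_homog 0" by (rule homog_scal)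
next
  fix x y :: "('f, 'h) fa" assume "x \<in> fa_homog 0" "y \<in> fa_homog 0"
  then show "fa_add x y \<in> fa_homog 0" by (simp add: fa_add_eq homog_add)
next
  fix x y :: "('f, 'h) fa" assume "x \<in> fa_homog 0" "y \<in> fa_homog 0"
  then show "x \<odot> y \<in> fa_homog 0" using homog_mult[of x 0 y 0] by simp
qed

lemma Sub_FA: "x \<in> Sub \<Longrightarrow> x \<in> FA" using Sub_homog by (auto simp: fa_homog_def)

lemma Sub_add: "x \<in> Sub \<Longrightarrow> y \<in> Sub \<Longrightarrow> x + y \<in> Sub"
  using fa_subalg.add[of x _ y] by (simp add: fa_add_eq)
lemma Sub_mult: "x \<in> Sub \<Longrightarrow> y \<in> Sub \<Longrightarrow> x \<odot> y \<in> Sub"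
  by (rule fa_subalg.mult)
lemma Sub_smul: assumes "x \<in> Sub" shows "smul c x \<in> Sub"
proof -
  have "fa_scal c \<odot> x \<in> Sub" by (rule Sub_mult[OF fa_subalg.scal assms])
  then show ?thesis by (simp only: scal_mult[OF Sub_FA[OF assms]])
qed
lemma Sub_diff: "x \<in> Sub \<Longrightarrow> y \<in> Sub \<Longrightarrow> x - y \<in> Sub"
  using Sub_add[OF _ Sub_smul[of y "-1"]] by (simp add: smul_neg)
lemma Sub_zero: "(0 :: ('f::field, 'h) fa) \<in> Sub"
proof -
  have "fa_scal 0 \<in> (Sub :: ('f, 'h) fa set)" by (rule fa_subalg.scal)
  moreover have "fa_scal (0::'f) = (0 :: ('f,'h) fa)" by (simp add: fa_scal_def fun_eq_iff)
  ultimately show ?thesis by simp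
qed
lemma Sub_sum: fixes f :: "'c \<Rightarrow> ('f::field, 'h) fa" and A :: "'c set"
  shows "(\<And>a. a \<in> A \<Longrightarrow> f a \<in> Sub) \<Longrightarrow> (\<Sum>a\<in>A. f a) \<in> Sub"
proof -
  assume a: "\<And>a. a \<in> A \<Longrightarrow> f a \<in> Sub"
  have "(\<forall>a\<in>A. f a \<in> Sub) \<longrightarrow> (\<Sum>a\<in>A. f a) \<in> Sub"
  proof (rule infinite_finite_induct[of "\<lambda>A. (\<forall>a\<in>A. f a \<in> Sub) \<longrightarrow> (\<Sum>a\<in>A. f a) \<in> Sub" A])
    fix B :: "'c set" assume "infinite B" then show "(\<forall>a\<in>B. f a \<in> Sub) \<longrightarrow> (\<Sum>a\<in>B. f a) \<in> Sub"
      using Sub_zero[where 'f='f and 'h='h] by simp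
  next
    show "(\<forall>a\<in>{}. f a \<in> Sub) \<longrightarrow> (\<Sum>a\<in>{}. f a) \<in> Sub" using Sub_zero[where 'f='f and 'h='h] by simp
  next
    fix x F assume F: "finite F" "x \<notin> F" and IH: "(\<forall>a\<in>F. f a \<in> Sub) \<longrightarrow> (\<Sum>a\<in>F. f a) \<in> Sub"
    show "(\<forall>a\<in>insert x F. f a \<in> Sub) \<longrightarrow> (\<Sum>a\<in>insert x F. f a) \<in> Sub"
    proof
      assume a: "\<forall>a\<in>insert x F. f a \<in> Sub"
      have "f x + (\<Sum>a\<in>F. f a) \<in> Sub" using a IH by (intro Sub_add) auto
      then show "(\<Sum>a\<in>insert x F. f a) \<in> Sub" by (simp only: sum.insert[OF F])
    qed
  qed
  then show ?thesis using a by blast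
qed
lemma Sub_H: "mon [GH h] \<in> Sub"
proof -
  have "fa_gen (GH h) \<in> Sub" by (rule fa_subalg.gen) blast
  then show ?thesis by (simp only: fa_gen_eq)
qed
lemma Sub_DU: "mon [GD, GU] \<in> Sub"
proof -
  have "fa_mult (fa_gen GD) (fa_gen GU) \<in> Sub" by (rule fa_subalg.gen) blast
  then show ?thesis by (simp only: fa_gen_eq mon_mult append_Cons append_Nil)
qed

lemma unit_mult: "(a::'a::comm_ring_1) dvd 1 \<Longrightarrow> b dvd 1 \<Longrightarrow> a * b dvd 1"
  using mult_dvd_mono[of a 1 b 1] by simp

lemma sum_list_nz: "sum_list (map f L) \<noteq> (0::'a::comm_monoid_add) \<Longrightarrow> \<exists>e\<in>set L. f e \<noteq> 0"
  by (induction L) auto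

context gw
begin

lemma evw_line: "(\<forall>a b. v (a, b) \<noteq> 0 \<longrightarrow> int b - int a = d) \<Longrightarrow>
  (\<forall>a b. evw w v (a, b) \<noteq> 0 \<longrightarrow> int b - int a = d + word_deg w)"
proof (induction w)
  case Nil then show ?case by simp
next
  case (Cons x w)
  then have IH: "\<And>a b. evw w v (a, b) \<noteq> 0 \<Longrightarrow> int b - int a = d + word_deg w" by blast
  show ?case
  proof (intro allI impI)
    fix a b assume nz: "evw (x # w) v (a, b) \<noteq> 0"
    show "int b - int a = d + word_deg (x # w)"
    proof (cases x)
      case (GH h)
      then have "evw w v (a, b) \<noteq> 0" using nz by (auto simp: Lop_def)
      then show ?thesis using IH GH by simp
    next
      case GD
      then have "a \<noteq> 0" "evw w v (a - 1, b) \<noteq> 0" using nz by (auto simp: Dop_def split: if_splits)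
      then show ?thesis using GD IH[of "a - 1" b] by simp
    next
      case GU
      then have "evw w v (Suc a, b) \<noteq> 0 \<or> (b \<noteq> 0 \<and> evw w v (a, b - 1) \<noteq> 0)" using nz
        by (auto simp: Uop_def split: if_splits)
      then show ?thesis using GU IH[of "Suc a" b] IH[of a "b - 1"] by auto
    qed
  qed
qed

lemma T_deg: assumes "p \<in> fa_homog m" "T p (a, b) \<noteq> 0" shows "int b - int a = m"
proof -
  have "T p (a, b) = (\<Sum>w | p w \<noteq> 0. \<iota> (p w) * evw w (ee 0 0) (a, b))"
    by (simp add: T_def ev_def sum_fun_apply scv_def)
  then obtain w where w: "p w \<noteq> 0" "\<iota> (p w) * evw w (ee 0 0) (a, b) \<noteq> 0"
    using assms(2) by (auto elim: sum.not_neutral_contains_not_neutral)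
  then have "evw w (ee 0 0) (a, b) \<noteq> 0" by auto
  moreover have "\<forall>a b. ee 0 0 (a, b) \<noteq> (0::'h) \<longrightarrow> int b - int a = 0" by (simp add: ee_def)
  ultimately have "int b - int a = 0 + word_deg w" using evw_line by blast
  then show ?thesis using w(1) assms(1) by (simp add: fa_homog_def)
qed

lemma fin_T: assumes "p \<in> FA" shows "\<exists>N. \<forall>a b. T p (a, b) \<noteq> 0 \<longrightarrow> a < N \<and> b < N"
proof -
  obtain L where L: "p \<approx> SL L" using norm[OF assms] by blast
  let ?N = "Suc (sum_list (map (\<lambda>(h, i, j). i + j) L))"
  have "a < ?N \<and> b < ?N" if nz: "T p (a, b) \<noteq> 0" for a b
  proof -
    have "sum_list (map (\<lambda>(h, i, j). if (a, b) = (i, j) then h else 0) L) \<noteq> 0"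
      using nz T_eqv[OF L] T_SL by metis
    then obtain e where e: "e \<in> set L" "(\<lambda>(h, i, j). if (a, b) = (i, j) then h else 0) e \<noteq> 0"
      using sum_list_nz by blast
    obtain h i j where eh: "e = (h, i, j)" by (cases e) auto
    then have "a = i" "b = j" using e(2) by (auto split: if_splits)
    moreover have "i + j \<le> sum_list (map (\<lambda>(h, i, j). i + j) L)"
      apply (rule member_le_sum_list) using e(1) eh by force+
    ultimately show ?thesis by simp
  qed
  then show ?thesis by blast
qed

lemma \<theta>i_unit: assumes "x dvd 1" shows "\<theta>i x dvd 1"
proof -
  obtain k where "1 = x * k" using assms by (auto elim: dvdE)
  then have "1 = \<theta>i x * \<theta>i k" by (metis \<theta>i_1 \<theta>i_mult)
  then show ?thesis by (rule dvdI)
qed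

lemma ga_unit: "ga n dvd 1"
proof (induction n)
  case 0 then show ?case by simp
next
  case (Suc n)
  obtain w where "z1 * w = 1" using z1u by blast
  then have "z1 dvd 1" by (metis dvdI)
  then show ?case using Suc by (simp only: ga.simps) (rule \<theta>i_unit[OF unit_mult])
qed

lemma \<theta>_unit: assumes "x dvd 1" shows "\<theta> x dvd 1"
proof -
  obtain k where "1 = x * k" using assms by (auto elim: dvdE)
  then have "1 = \<theta> x * \<theta> k" by (metis \<theta>_1 \<theta>_mult)
  then show ?thesis by (rule dvdI)
qed
lemma \<theta>ipow_unit: "x dvd 1 \<Longrightarrow> (\<theta>i ^^ n) x dvd 1"
  by (induction n) (simp_all add: \<theta>i_unit)

lemma Upow_lead: assumes "\<forall>a b. b0 < b \<longrightarrow> v (a, b) = 0" "v (a0, b0) dvd 1"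
  shows "(\<forall>a b. b0 + i < b \<longrightarrow> (Uop ^^ i) v (a, b) = 0) \<and> (Uop ^^ i) v (a0, b0 + i) dvd 1"
proof (induction i)
  case 0 then show ?case using assms by simp
next
  case (Suc i)
  let ?u = "(Uop ^^ i) v"
  have z: "\<And>a b. b0 + i < b \<Longrightarrow> ?u (a, b) = 0" using Suc by blast
  have "\<forall>a b. b0 + Suc i < b \<longrightarrow> Uop ?u (a, b) = 0"
    by (auto simp: Uop_def z)
  moreover have "Uop ?u (a0, b0 + Suc i) = \<theta> (?u (a0, b0 + i)) * ga a0"
    by (simp add: Uop_def z)
  moreover have "\<theta> (?u (a0, b0 + i)) * ga a0 dvd 1"
  proof (rule unit_mult[OF \<theta>_unit ga_unit])
    show "?u (a0, b0 + i) dvd 1" using Suc by blast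
  qed
  ultimately show ?case by simp
qed

lemma Dpow_shift: "(Dop ^^ i) v (a + i, b) = (\<theta>i ^^ i) (v (a, b))"
  by (induction i) (simp_all add: Dop_def)

lemma Dpow_col: "(\<forall>a. v (a, b) = 0) \<Longrightarrow> (Dop ^^ i) v (a, b) = 0"
proof (induction i arbitrary: a)
  case (Suc i) then show ?case by (simp add: Dop_def)
qed simp

end

lemma word_deg_repD: "word_deg (replicate n GD) = - int n" by (induction n) simp_all
lemma word_deg_repU: "word_deg (replicate n GU) = int n" by (induction n) simp_all
lemma homog_nf: "nf h i j \<in> fa_homog (int j - int i)"
  using homog_mon[of "GH h # nfw i j"] by (simp add: nf_def nfw_def word_deg_append word_deg_repD word_deg_repU)
lemma homog_Dk: "mon (replicate k GD) \<in> fa_homog (- int k)"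
  using homog_mon[of "replicate k GD"] by (simp add: word_deg_repD)
lemma homog_Uk: "mon (replicate k GU) \<in> fa_homog (int k)"
  using homog_mon[of "replicate k GU"] by (simp add: word_deg_repU)
lemma homog_DU: "mon [GD, GU] \<in> fa_homog 0"
  using homog_mon[of "[GD, GU]"] by simp

context gw
begin

lemma T_DU: "T (mon [GD, GU]) = ee 1 1"
  by (simp add: T_def ev_mon Uop_ee0 Dop_ee)
lemma T_Dk: "T (mon (replicate k GD)) = ee k 0"
  by (simp add: T_def ev_mon evw_rep Dpow_ee)
lemma T_Uk: "T (mon (replicate k GU)) = ee 0 k"
  by (simp add: T_def ev_mon evw_rep Upow_ee0)

lemma eqv_solve: assumes "q \<approx> A + B" "A \<in> FA" "B \<in> FA" shows "A \<approx> q - B"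
proof -
  have "(A + B) - B \<approx> q - B" by (rule eqv_diff[OF eqv_sym[OF assms(1)] eqv_refl[OF assms(3)]])
  then show ?thesis by simp
qed

lemma TRI: fixes q :: "('f, 'h) fa" assumes q: "q \<in> FA" and sup: "\<forall>a b. T q (a, b) \<noteq> 0 \<longrightarrow> a = b + k \<and> b \<le> i"
  shows "q \<approx> nfe (T q (i + k, i), (i + k, i)) + (\<Sum>b\<in>{..<i}. nfe (T q (b + k, b), (b + k, b)))"
proof -
  let ?pos = "\<lambda>b::nat. (b + k, b)"
  have z: "T q y = 0" if "y \<notin> ?pos ` {..i}" for y
  proof (rule ccontr)
    assume nz: "T q y \<noteq> 0"
    obtain a b where y: "y = (a, b)" by (cases y)
    then have "a = b + k \<and> b \<le> i" using sup nz by blast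
    then show False using that y by auto
  qed
  have "q \<approx> (\<Sum>y\<in>?pos ` {..i}. nfe (T q y, y))" by (rule DEC[OF q]) (simp_all add: z)
  also have "(\<Sum>y\<in>?pos ` {..i}. nfe (T q y, y)) = (\<Sum>b\<in>{..i}. nfe (T q (?pos b), ?pos b))"
    by (simp add: sum.reindex inj_on_def)
  also have "{..i} = insert i {..<i}" by auto
  also have "(\<Sum>b\<in>insert i {..<i}. nfe (T q (?pos b), ?pos b)) =
      nfe (T q (i + k, i), (i + k, i)) + (\<Sum>b\<in>{..<i}. nfe (T q (b + k, b), (b + k, b)))"
    by (simp add: sum.insert)
  finally show ?thesis .
qed

lemma S1: "\<exists>r\<in>Sub. r \<approx> nf h i i"
proof (induction i arbitrary: h rule: less_induct)
  case (less i)
  show ?case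
  proof (cases i)
    case 0
    then show ?thesis using Sub_H[of h] by (intro bexI[of _ "mon [GH h]"]) (simp_all add: nf_def nfw_def eqv_refl)
  next
    case (Suc n)
    let ?W = "(Uop ^^ n) (ee 1 1)"
    have lead: "(\<forall>a b. 1 + n < b \<longrightarrow> ?W (a, b) = 0) \<and> ?W (1, 1 + n) dvd 1"
      by (rule Upow_lead) (auto simp: ee_def)
    let ?u = "(\<theta>i ^^ n) (?W (1, 1 + n))"
    have "?u dvd 1" by (rule \<theta>ipow_unit) (use lead in blast)
    then obtain winv where winv: "1 = ?u * winv" by (rule dvdE)
    define c where "c = h * winv"
    obtain r where r: "r \<in> Sub" "r \<approx> nf c n n" using less.IH[of n c] Suc by auto
    define q where "q = (nf c n n :: ('f, 'h) fa) \<odot> mon [GD, GU]"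
    have qFA: "q \<in> FA" by (simp add: q_def)
    have qr: "q \<approx> r \<odot> mon [GD, GU]" unfolding q_def by (rule eqv_mult[OF eqv_sym[OF r(2)] eqv_refl]) simp
    have rS: "r \<odot> mon [GD, GU] \<in> Sub" by (rule Sub_mult[OF r(1) Sub_DU])
    have Tq: "T q = Lop c ((Dop ^^ n) ?W)"
      by (simp add: q_def T_mult T_DU ev_nf)
    have hq: "q \<in> fa_homog 0" unfolding q_def using homog_mult[OF homog_nf[of c n n] homog_DU] by simp
    have sup: "\<forall>a b. T q (a, b) \<noteq> 0 \<longrightarrow> a = b + 0 \<and> b \<le> Suc n"
    proof (intro allI impI)
      fix a b assume nz: "T q (a, b) \<noteq> 0"
      have "int b - int a = 0" by (rule T_deg[OF hq nz])
      moreover have "b \<le> Suc n"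
      proof (rule ccontr)
        assume "\<not> b \<le> Suc n"
        then have "\<forall>a'. ?W (a', b) = 0" using lead by simp
        then have "(Dop ^^ n) ?W (a, b) = 0" by (rule Dpow_col)
        then show False using nz by (simp add: Tq Lop_def)
      qed
      ultimately show "a = b + 0 \<and> b \<le> Suc n" by simp
    qed
    have top: "T q (Suc n, Suc n) = h"
    proof -
      have "(Dop ^^ n) ?W (1 + n, 1 + n) = ?u" by (rule Dpow_shift)
      then have "T q (Suc n, Suc n) = c * ?u" by (simp add: Tq Lop_def)
      then show ?thesis using winv by (simp add: c_def mult.assoc mult.commute[of winv])
    qed
    have dec: "q \<approx> nfe (T q (Suc n + 0, Suc n), (Suc n + 0, Suc n)) +
        (\<Sum>b\<in>{..<Suc n}. nfe (T q (b + 0, b), (b + 0, b)))"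
      by (rule TRI[OF qFA sup])
    have "\<forall>b\<in>{..<Suc n}. \<exists>r. r \<in> Sub \<and> r \<approx> nf (T q (b, b)) b b"
      using less.IH Suc by auto
    from bchoice[OF this] obtain rf where rf: "\<And>b. b \<in> {..<Suc n} \<Longrightarrow> rf b \<in> Sub \<and> rf b \<approx> nf (T q (b, b)) b b"
      by blast
    have "nf h (Suc n) (Suc n) = nfe (T q (Suc n + 0, Suc n), (Suc n + 0, Suc n))"
      using top by (simp add: nfe_def)
    also have "\<dots> \<approx> q - (\<Sum>b\<in>{..<Suc n}. nfe (T q (b + 0, b), (b + 0, b)))"
      by (rule eqv_solve[OF dec]) simp_all
    also have "\<dots> \<approx> r \<odot> mon [GD, GU] - (\<Sum>b\<in>{..<Suc n}. rf b)"
    proof (rule eqv_diff[OF qr eqv_sum])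
      fix b assume "b \<in> {..<Suc n}"
      then show "nfe (T q (b + 0, b), (b + 0, b)) \<approx> rf b" using rf by (simp add: nfe_def eqv_sym)
    qed
    finally have "r \<odot> mon [GD, GU] - (\<Sum>b\<in>{..<Suc n}. rf b) \<approx> nf h i i"
      using Suc by (simp add: eqv_sym)
    moreover have "r \<odot> mon [GD, GU] - (\<Sum>b\<in>{..<Suc n}. rf b) \<in> Sub"
      using rS rf by (intro Sub_diff Sub_sum) auto
    ultimately show ?thesis by blast
  qed
qed

lemma S2: "\<exists>r\<in>Sub. nf h (i + k) i \<approx> r \<odot> mon (replicate k GD)"
proof (induction i arbitrary: h rule: less_induct)
  case (less i)
  let ?dk = "mon (replicate k GD) :: ('f, 'h) fa"
  let ?W = "(Uop ^^ i) (ee k 0)"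
  have lead: "(\<forall>a b. 0 + i < b \<longrightarrow> ?W (a, b) = 0) \<and> ?W (k, 0 + i) dvd 1"
    by (rule Upow_lead) (auto simp: ee_def)
  let ?u = "(\<theta>i ^^ i) (?W (k, i))"
  have "?u dvd 1" by (rule \<theta>ipow_unit) (use lead in simp)
  then obtain winv where winv: "1 = ?u * winv" by (rule dvdE)
  define c where "c = h * winv"
  obtain r where r: "r \<in> Sub" "r \<approx> nf c i i" using S1 by blast
  define q where "q = nf c i i \<odot> ?dk"
  have qFA: "q \<in> FA" by (simp add: q_def)
  have qr: "q \<approx> r \<odot> ?dk" unfolding q_def by (rule eqv_mult[OF eqv_sym[OF r(2)] eqv_refl]) simp
  have Tq: "T q = Lop c ((Dop ^^ i) ?W)"
    by (simp add: q_def T_mult T_Dk ev_nf)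
  have hq: "q \<in> fa_homog (- int k)" unfolding q_def using homog_mult[OF homog_nf[of c i i] homog_Dk] by simp
  have sup: "\<forall>a b. T q (a, b) \<noteq> 0 \<longrightarrow> a = b + k \<and> b \<le> i"
  proof (intro allI impI)
    fix a b assume nz: "T q (a, b) \<noteq> 0"
    have "int b - int a = - int k" by (rule T_deg[OF hq nz])
    moreover have "b \<le> i"
    proof (rule ccontr)
      assume "\<not> b \<le> i"
      then have "\<forall>a'. ?W (a', b) = 0" using lead by simp
      then have "(Dop ^^ i) ?W (a, b) = 0" by (rule Dpow_col)
      then show False using nz by (simp add: Tq Lop_def)
    qed
    ultimately show "a = b + k \<and> b \<le> i" by simp
  qed
  have top: "T q (i + k, i) = h"
  proof -
    have "(Dop ^^ i) ?W (k + i, i) = ?u" by (rule Dpow_shift)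
    then have "T q (i + k, i) = c * ?u" by (simp add: Tq Lop_def add.commute)
    then show ?thesis using winv by (simp add: c_def mult.assoc mult.commute[of winv])
  qed
  have dec: "q \<approx> nfe (T q (i + k, i), (i + k, i)) + (\<Sum>b\<in>{..<i}. nfe (T q (b + k, b), (b + k, b)))"
    by (rule TRI[OF qFA sup])
  have "\<forall>b\<in>{..<i}. \<exists>r. r \<in> Sub \<and> nf (T q (b + k, b)) (b + k) b \<approx> r \<odot> ?dk"
    using less.IH by auto
  from bchoice[OF this] obtain rf where rf: "\<And>b. b \<in> {..<i} \<Longrightarrow> rf b \<in> Sub \<and> nf (T q (b + k, b)) (b + k) b \<approx> rf b \<odot> ?dk"
    by blast
  have "nf h (i + k) i = nfe (T q (i + k, i), (i + k, i))"
    by (simp add: top nfe_def)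
  also have "\<dots> \<approx> q - (\<Sum>b\<in>{..<i}. nfe (T q (b + k, b), (b + k, b)))"
    by (rule eqv_solve[OF dec]) simp_all
  also have "\<dots> \<approx> r \<odot> ?dk - (\<Sum>b\<in>{..<i}. rf b \<odot> ?dk)"
  proof (rule eqv_diff[OF qr eqv_sum])
    fix b assume "b \<in> {..<i}"
    then show "nfe (T q (b + k, b), (b + k, b)) \<approx> rf b \<odot> ?dk" using rf by (simp add: nfe_def)
  qed
  also have "\<dots> = (r - (\<Sum>b\<in>{..<i}. rf b)) \<odot> ?dk"
    by (simp add: mult_diff_left mult_sum_left)
  finally have "nf h (i + k) i \<approx> (r - (\<Sum>b\<in>{..<i}. rf b)) \<odot> ?dk" .
  moreover have "r - (\<Sum>b\<in>{..<i}. rf b) \<in> Sub"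
    using r rf by (intro Sub_diff Sub_sum) auto
  ultimately show ?case by blast
qed

lemma S3: "\<exists>r\<in>Sub. nf h i (i + k) \<approx> r \<odot> mon (replicate k GU)"
proof -
  obtain r where r: "r \<in> Sub" "r \<approx> nf h i i" using S1 by blast
  have "nf h i (i + k) = nf h i i \<odot> mon (replicate k GU)"
    by (simp add: nf_def nfw_def mon_mult replicate_add)
  also have "\<dots> \<approx> r \<odot> mon (replicate k GU)" by (rule eqv_mult[OF eqv_sym[OF r(2)] eqv_refl]) simp
  finally show ?thesis using r(1) by blast
qed

end

context gw
begin

lemma span_gen:
  fixes g p :: "('f, 'h) fa" and pos :: "nat \<Rightarrow> nat \<times> nat"
  assumes g: "g \<in> FA" and p: "p \<in> FA" and inj: "inj pos"
    and gen: "\<And>b h. \<exists>r\<in>Sub. nfe (h, pos b) \<approx> r \<odot> g"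
    and sup: "\<And>y. T p y \<noteq> 0 \<Longrightarrow> y \<in> pos ` {..<N}"
  shows "\<exists>R\<in>Sub. p \<approx> R \<odot> g"
proof -
  have injN: "inj_on pos {..<N}" using inj by (rule inj_on_subset) simp
  have "\<forall>b. \<exists>r. r \<in> Sub \<and> nfe (T p (pos b), pos b) \<approx> r \<odot> g" using gen by blast
  from choice[OF this] obtain rf where rf: "\<And>b. rf b \<in> Sub \<and> nfe (T p (pos b), pos b) \<approx> rf b \<odot> g"
    by blast
  have "p \<approx> (\<Sum>y\<in>pos ` {..<N}. nfe (T p y, y))"
    by (rule DEC[OF p]) (use sup in blast)+
  also have "\<dots> = (\<Sum>b\<in>{..<N}. nfe (T p (pos b), pos b))"
    by (simp add: sum.reindex[OF injN])
  also have "\<dots> \<approx> (\<Sum>b\<in>{..<N}. rf b \<odot> g)"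
    by (rule eqv_sum) (use rf in blast)
  also have "\<dots> = (\<Sum>b\<in>{..<N}. rf b) \<odot> g" by (simp add: mult_sum_left)
  finally show ?thesis using rf by (intro bexI[of _ "\<Sum>b\<in>{..<N}. rf b"] Sub_sum) auto
qed

definition gen :: "int \<Rightarrow> ('f, 'h) fa" where
  "gen m = (if 0 \<le> m then mon (replicate (nat m) GU) else mon (replicate (nat (- m)) GD))"

lemma gen_FA: "gen m \<in> FA" by (simp add: gen_def)
lemma gen_homog: "gen m \<in> fa_homog m"
proof (cases "0 \<le> m")
  case True then show ?thesis using homog_Uk[of "nat m"] by (simp add: gen_def)
next
  case False then show ?thesis using homog_Dk[of "nat (- m)"] by (simp add: gen_def)
qed

lemma span_homog: assumes p: "p \<in> fa_homog m" shows "\<exists>R\<in>Sub. p \<approx> R \<odot> gen m"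
proof -
  have pFA: "p \<in> FA" using p by (simp add: fa_homog_def)
  obtain N where N: "\<And>a b. T p (a, b) \<noteq> 0 \<Longrightarrow> a < N \<and> b < N" using fin_T[OF pFA] by blast
  show ?thesis
  proof (cases "0 \<le> m")
    case True
    define k where "k = nat m"
    have gk: "gen m = mon (replicate k GU)" using True by (simp add: gen_def k_def)
    show ?thesis unfolding gk
    proof (rule span_gen[OF FA_mon pFA, where pos = "\<lambda>b. (b, b + k)" and N = N])
      show "inj (\<lambda>b. (b, b + k))" by (simp add: inj_def)
    next
      fix b h show "\<exists>r\<in>Sub. nfe (h, b, b + k) \<approx> r \<odot> mon (replicate k GU)"
        using S3[of h b k] by (simp add: nfe_def)
    next
      fix y assume nz: "T p y \<noteq> 0"
      obtain a b where y: "y = (a, b)" by (cases y)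
      have "int b - int a = m" using T_deg[OF p] nz y by simp
      then have "b = a + k" using True by (simp add: k_def)
      then show "y \<in> (\<lambda>b. (b, b + k)) ` {..<N}" using N[of a b] nz y by auto
    qed
  next
    case False
    define k where "k = nat (- m)"
    have gk: "gen m = mon (replicate k GD)" using False by (simp add: gen_def k_def)
    show ?thesis unfolding gk
    proof (rule span_gen[OF FA_mon pFA, where pos = "\<lambda>b. (b + k, b)" and N = N])
      show "inj (\<lambda>b. (b + k, b))" by (simp add: inj_def)
    next
      fix b h show "\<exists>r\<in>Sub. nfe (h, b + k, b) \<approx> r \<odot> mon (replicate k GD)"
        using S2[of h b k] by (simp add: nfe_def)
    next
      fix y assume nz: "T p y \<noteq> 0"
      obtain a b where y: "y = (a, b)" by (cases y)
      have "int b - int a = m" using T_deg[OF p] nz y by simp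
      then have "a = b + k" using False by (simp add: k_def)
      then show "y \<in> (\<lambda>b. (b + k, b)) ` {..<N}" using N[of a b] nz y by auto
    qed
  qed
qed

lemma inj_gen:
  fixes R g :: "('f, 'h) fa"
  assumes R: "R \<in> Sub" and g: "g \<in> FA" and RI: "R \<odot> g \<in> I"
    and z: "\<forall>a b. b0 < b \<longrightarrow> T g (a, b) = 0" and u: "T g (a0, b0) dvd 1"
  shows "R \<in> I"
proof -
  have RFA: "R \<in> FA" using R by (rule Sub_FA)
  have hR: "R \<in> fa_homog 0" using R by (rule Sub_homog)
  obtain N where N: "\<And>a b. T R (a, b) \<noteq> 0 \<Longrightarrow> a < N \<and> b < N" using fin_T[OF RFA] by blast
  define A where "A b = T R (b, b)" for b
  have diag: "a = b" if "T R (a, b) \<noteq> 0" for a b using T_deg[OF hR that] by simp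
  have injN: "inj_on (\<lambda>b::nat. (b, b)) {..<N}" by (simp add: inj_on_def)
  have "R \<approx> (\<Sum>y\<in>(\<lambda>b. (b, b)) ` {..<N}. nfe (T R y, y))"
  proof (rule DEC[OF RFA])
    fix y assume "y \<notin> (\<lambda>b. (b, b)) ` {..<N}"
    then show "T R y = 0" using N diag by (cases y) force
  qed simp
  also have "\<dots> = (\<Sum>b\<in>{..<N}. nf (A b) b b)"
    by (simp add: sum.reindex[OF injN] nfe_def A_def)
  finally have dec: "R \<approx> (\<Sum>b\<in>{..<N}. nf (A b) b b)" .
  have "ev R (T g) = T (R \<odot> g)" using RFA g by (simp add: T_mult)
  also have "\<dots> = 0" using I_ker[OF RI] by (simp add: T_def)
  finally have "ev R (T g) = 0" .
  then have evz: "(\<Sum>b\<in>{..<N}. Lop (A b) ((Dop ^^ b) ((Uop ^^ b) (T g)))) = 0"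
    using ev_eqv[OF dec, of "T g"] by (simp add: ev_sum ev_nf)
  have allz: "\<forall>b<N. A b = 0"
  proof (rule ccontr)
    assume "\<not> (\<forall>b<N. A b = 0)"
    then have ne: "{b. b < N \<and> A b \<noteq> 0} \<noteq> {}" by auto
    define n where "n = Max {b. b < N \<and> A b \<noteq> 0}"
    have fin: "finite {b. b < N \<and> A b \<noteq> 0}" by simp
    have nS: "n < N" "A n \<noteq> 0" using Max_in[OF fin ne] by (auto simp: n_def)
    have nmax: "b \<le> n" if "b < N" "A b \<noteq> 0" for b using Max_ge[OF fin] that by (auto simp: n_def)
    let ?U = "\<lambda>b. (Uop ^^ b) (T g)"
    have lead: "(\<forall>a c. b0 + b < c \<longrightarrow> ?U b (a, c) = 0) \<and> ?U b (a0, b0 + b) dvd 1" for b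
      by (rule Upow_lead[OF z u])
    have term0: "A b * (Dop ^^ b) (?U b) (a0 + n, b0 + n) = 0" if "b \<in> {..<N}" "b \<noteq> n" for b
    proof (cases "A b = 0")
      case False
      then have "b < n" using nmax[of b] that by auto
      then have "\<forall>a. ?U b (a, b0 + n) = 0" using lead[of b] by simp
      then have "(Dop ^^ b) (?U b) (a0 + n, b0 + n) = 0" by (rule Dpow_col)
      then show ?thesis by simp
    qed simp
    have "0 = (\<Sum>b\<in>{..<N}. Lop (A b) ((Dop ^^ b) (?U b))) (a0 + n, b0 + n)" using evz by simp
    also have "\<dots> = (\<Sum>b\<in>{..<N}. A b * (Dop ^^ b) (?U b) (a0 + n, b0 + n))"
      by (simp add: sum_fun_apply Lop_def)
    also have "\<dots> = A n * (Dop ^^ n) (?U n) (a0 + n, b0 + n)"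
      using nS(1) term0 by (simp add: sum.remove[of "{..<N}" n] sum.neutral)
    also have "(Dop ^^ n) (?U n) (a0 + n, b0 + n) = (\<theta>i ^^ n) (?U n (a0, b0 + n))"
      by (rule Dpow_shift)
    finally have An0: "A n * (\<theta>i ^^ n) (?U n (a0, b0 + n)) = 0" by simp
    have "(\<theta>i ^^ n) (?U n (a0, b0 + n)) dvd 1" by (rule \<theta>ipow_unit) (use lead[of n] in blast)
    then obtain kk where kk: "1 = (\<theta>i ^^ n) (?U n (a0, b0 + n)) * kk" by (rule dvdE)
    have "A n = A n * ((\<theta>i ^^ n) (?U n (a0, b0 + n)) * kk)" using kk by simp
    also have "\<dots> = (A n * (\<theta>i ^^ n) (?U n (a0, b0 + n))) * kk" by (simp only: mult.assoc)
    also have "\<dots> = 0" using An0 by simp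
    finally have "A n = 0" .
    then show False using nS by simp
  qed
  have "T R = 0"
  proof (rule ext)
    fix y :: "nat \<times> nat"
    obtain a b where y: "y = (a, b)" by (cases y)
    have "T R (a, b) = 0"
    proof (rule ccontr)
      assume nz: "T R (a, b) \<noteq> 0"
      then have "a = b" "a < N" using diag N by auto
      then show False using allz nz by (simp add: A_def)
    qed
    then show "T R y = 0 y" using y by simp
  qed
  then show ?thesis by (rule kernel[OF RFA])
qed

lemma inj_homog: assumes "R \<in> Sub" "R \<odot> gen m \<in> I" shows "R \<in> I"
proof (cases "0 \<le> m")
  case True
  then have g: "gen m = mon (replicate (nat m) GU)" by (simp add: gen_def)
  show ?thesis
  proof (rule inj_gen[OF assms(1) FA_mon, of "replicate (nat m) GU" "nat m" 0])
    show "R \<odot> mon (replicate (nat m) GU) \<in> I" using assms(2) g by simp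
  qed (auto simp: T_Uk ee_def)
next
  case False
  then have g: "gen m = mon (replicate (nat (- m)) GD)" by (simp add: gen_def)
  show ?thesis
  proof (rule inj_gen[OF assms(1) FA_mon, of "replicate (nat (- m)) GD" 0 "nat (- m)"])
    show "R \<odot> mon (replicate (nat (- m)) GD) \<in> I" using assms(2) g by simp
  qed (auto simp: T_Dk ee_def)
qed

end

context gw
begin

abbreviation "cls \<equiv> gwa_cls \<iota> \<theta> z0 z1"

lemma in_cls: "y \<in> cls x \<longleftrightarrow> y \<in> FA \<and> y - x \<in> I"
  by (simp add: gwa_cls_def fa_diff_eq)

lemma cls_eq: assumes "x \<in> FA" "y \<in> FA" shows "cls x = cls y \<longleftrightarrow> x \<approx> y"
proof
  assume e: "cls x = cls y"
  have "x \<in> cls x" using assms by (simp add: in_cls)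
  then have "x \<in> cls y" using e by simp
  then show "x \<approx> y" using assms by (simp add: in_cls eqv_def)
next
  assume xy: "x \<approx> y"
  show "cls x = cls y"
  proof (rule set_eqI)
    fix z
    have "z \<approx> x \<longleftrightarrow> z \<approx> y" using xy eqv_trans eqv_sym by blast
    then show "z \<in> cls x \<longleftrightarrow> z \<in> cls y" using assms by (simp add: in_cls eqv_def)
  qed
qed

lemma rep_cls: assumes "x \<in> FA" shows "gwa_rep (cls x) \<approx> x"
proof -
  have "x \<in> cls x" using assms by (simp add: in_cls)
  then have "gwa_rep (cls x) \<in> cls x" unfolding gwa_rep_def by (rule someI[of "\<lambda>y. y \<in> cls x" x])
  then show ?thesis using assms by (simp add: in_cls eqv_def)
qed

lemma add_cls: assumes "x \<in> FA" "y \<in> FA" shows "gwa_add \<iota> \<theta> z0 z1 (cls x) (cls y) = cls (x + y)"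
proof -
  have e: "gwa_rep (cls x) + gwa_rep (cls y) \<approx> x + y" by (rule eqv_add[OF rep_cls rep_cls]) (use assms in auto)
  show ?thesis unfolding gwa_add_def fa_add_eq
    using cls_eq[OF eqv_FA1[OF e] eqv_FA2[OF e]] e by simp
qed

lemma mult_cls: assumes "x \<in> FA" "y \<in> FA" shows "gwa_mult \<iota> \<theta> z0 z1 (cls x) (cls y) = cls (x \<odot> y)"
proof -
  have e: "gwa_rep (cls x) \<odot> gwa_rep (cls y) \<approx> x \<odot> y" by (rule eqv_mult[OF rep_cls rep_cls]) (use assms in auto)
  show ?thesis unfolding gwa_mult_def
    using cls_eq[OF eqv_FA1[OF e] eqv_FA2[OF e]] e by simp
qed

lemma main: "\<exists>\<phi>. gwa_left_module_iso \<iota> \<theta> z0 z1 (gwa_Hdu \<iota> \<theta> z0 z1)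
              (gwa_component \<iota> \<theta> z0 z1 m) (gwa_Hdu \<iota> \<theta> z0 z1) \<phi>"
proof -
  let ?g = "gen m"
  let ?H = "gwa_Hdu \<iota> \<theta> z0 z1" and ?A = "gwa_component \<iota> \<theta> z0 z1 m"
  let ?add = "gwa_add \<iota> \<theta> z0 z1" and ?mul = "gwa_mult \<iota> \<theta> z0 z1"
  have H: "?H = cls ` Sub" by (simp add: gwa_Hdu_def)
  have A: "?A = cls ` fa_homog m" by (simp add: gwa_component_def)
  define \<psi> where "\<psi> X = ?mul X (cls ?g)" for X
  have gFA: "?g \<in> FA" by (rule gen_FA)
  have psi: "\<psi> (cls r) = cls (r \<odot> ?g)" if "r \<in> Sub" for r
    using mult_cls[OF Sub_FA[OF that] gFA] by (simp add: \<psi>_def)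
  have inj: "inj_on \<psi> ?H"
  proof (rule inj_onI)
    fix X Y assume "X \<in> ?H" "Y \<in> ?H" and e: "\<psi> X = \<psi> Y"
    then obtain r s where rs: "r \<in> Sub" "s \<in> Sub" "X = cls r" "Y = cls s" by (auto simp: H)
    have rF: "r \<in> FA" "s \<in> FA" by (rule Sub_FA[OF rs(1)], rule Sub_FA[OF rs(2)])
    have "cls (r \<odot> ?g) = cls (s \<odot> ?g)" using e psi rs by simp
    then have "r \<odot> ?g \<approx> s \<odot> ?g" using cls_eq[OF FA_mult[OF rF(1) gFA] FA_mult[OF rF(2) gFA]] by simp
    then have "r \<odot> ?g - s \<odot> ?g \<in> I" by (simp add: eqv_def)
    then have "(r - s) \<odot> ?g \<in> I" by (simp add: mult_diff_left)
    then have "r - s \<in> I" using inj_homog Sub_diff rs by blast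
    then have "r \<approx> s" using rF by (simp add: eqv_def)
    then show "X = Y" using rs cls_eq[OF rF] by simp
  qed
  have img: "\<psi> ` ?H = ?A"
  proof
    show "\<psi> ` ?H \<subseteq> ?A"
    proof
      fix Z assume "Z \<in> \<psi> ` ?H"
      then obtain r where r: "r \<in> Sub" "Z = \<psi> (cls r)" by (auto simp: H)
      have "r \<odot> ?g \<in> fa_homog (0 + m)" by (rule homog_mult[OF Sub_homog[OF r(1)] gen_homog])
      then show "Z \<in> ?A" using r psi by (simp add: A)
    qed
  next
    show "?A \<subseteq> \<psi> ` ?H"
    proof
      fix Z assume "Z \<in> ?A"
      then obtain p where p: "p \<in> fa_homog m" "Z = cls p" by (auto simp: A)
      obtain R where R: "R \<in> Sub" "p \<approx> R \<odot> ?g" using span_homog[OF p(1)] by blast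
      have "Z = cls (R \<odot> ?g)" using p R by (simp add: cls_eq eqv_FA1 eqv_FA2)
      also have "\<dots> = \<psi> (cls R)" using psi R by simp
      finally show "Z \<in> \<psi> ` ?H" using R by (auto simp: H)
    qed
  qed
  have bij: "bij_betw \<psi> ?H ?A" using inj img by (simp add: bij_betw_def)
  define \<phi> where "\<phi> = inv_into ?H \<psi>"
  have bphi: "bij_betw \<phi> ?A ?H" unfolding \<phi>_def by (rule bij_betw_inv_into[OF bij])
  have phiH: "\<phi> X \<in> ?H" if "X \<in> ?A" for X using bij_betwE[OF bphi] that by blast
  have psiphi: "\<psi> (\<phi> X) = X" if "X \<in> ?A" for X
    unfolding \<phi>_def using that img by (simp add: f_inv_into_f)
  have phipsi: "\<phi> (\<psi> Y) = Y" if "Y \<in> ?H" for Y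
    unfolding \<phi>_def using that inj by (simp add: inv_into_f_f)
  have addH: "?add X Y \<in> ?H \<and> \<psi> (?add X Y) = ?add (\<psi> X) (\<psi> Y)" if "X \<in> ?H" "Y \<in> ?H" for X Y
  proof -
    from that(1) obtain r where r: "r \<in> Sub" "X = cls r" unfolding H by blast
    from that(2) obtain s where s: "s \<in> Sub" "Y = cls s" unfolding H by blast
    note rs = r(1) s(1) r(2) s(2)
    have rF: "r \<in> FA" "s \<in> FA" by (rule Sub_FA[OF rs(1)], rule Sub_FA[OF rs(2)])
    have e1: "?add X Y = cls (r + s)" using rs add_cls[OF rF] by simp
    have rsS: "r + s \<in> Sub" by (rule Sub_add[OF rs(1,2)])
    have e2: "\<psi> (cls (r + s)) = ?add (\<psi> X) (\<psi> Y)"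
      using rs psi[OF rsS] psi[OF rs(1)] psi[OF rs(2)] add_cls[OF FA_mult[OF rF(1) gFA] FA_mult[OF rF(2) gFA]]
      by (simp add: mult_add_left)
    have "cls (r + s) \<in> ?H" unfolding H by (rule imageI[OF rsS])
    then show ?thesis using e1 e2 by simp
  qed
  have mulH: "?mul R X \<in> ?H \<and> \<psi> (?mul R X) = ?mul R (\<psi> X)" if "R \<in> ?H" "X \<in> ?H" for R X
  proof -
    from that(1) obtain r where r: "r \<in> Sub" "R = cls r" unfolding H by blast
    from that(2) obtain s where s: "s \<in> Sub" "X = cls s" unfolding H by blast
    note rs = r(1) s(1) r(2) s(2)
    have rF: "r \<in> FA" "s \<in> FA" by (rule Sub_FA[OF rs(1)], rule Sub_FA[OF rs(2)])
    have e1: "?mul R X = cls (r \<odot> s)" using rs mult_cls[OF rF] by simp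
    have rsS: "r \<odot> s \<in> Sub" by (rule Sub_mult[OF rs(1,2)])
    have e2: "\<psi> (cls (r \<odot> s)) = ?mul R (\<psi> X)"
      using rs psi[OF rsS] psi[OF rs(2)] mult_cls[OF rF(1) FA_mult[OF rF(2) gFA]] mult_assoc[OF rF gFA]
      by simp
    have "cls (r \<odot> s) \<in> ?H" unfolding H by (rule imageI[OF rsS])
    then show ?thesis using e1 e2 by simp
  qed
  have "gwa_left_module_iso \<iota> \<theta> z0 z1 ?H ?A ?H \<phi>"
    unfolding gwa_left_module_iso_def
  proof (intro conjI ballI)
    show "bij_betw \<phi> ?A ?H" by (rule bphi)
  next
    fix X Y assume XY: "X \<in> ?A" "Y \<in> ?A"
    have "?add X Y = ?add (\<psi> (\<phi> X)) (\<psi> (\<phi> Y))" using XY psiphi by simp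
    also have "\<dots> = \<psi> (?add (\<phi> X) (\<phi> Y))" using addH phiH XY by simp
    finally have e: "?add X Y = \<psi> (?add (\<phi> X) (\<phi> Y))" .
    have "\<phi> (?add X Y) = \<phi> (\<psi> (?add (\<phi> X) (\<phi> Y)))" by (simp only: e)
    also have "\<dots> = ?add (\<phi> X) (\<phi> Y)" by (rule phipsi) (use addH phiH XY in blast)
    finally show "\<phi> (?add X Y) = ?add (\<phi> X) (\<phi> Y)" .
  next
    fix R X assume RX: "R \<in> ?H" "X \<in> ?A"
    have "?mul R X = ?mul R (\<psi> (\<phi> X))" using RX psiphi by simp
    also have "\<dots> = \<psi> (?mul R (\<phi> X))" using mulH phiH RX by simp
    finally have e: "?mul R X = \<psi> (?mul R (\<phi> X))" .
    have "\<phi> (?mul R X) = \<phi> (\<psi> (?mul R (\<phi> X)))" by (simp only: e)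
    also have "\<dots> = ?mul R (\<phi> X)" by (rule phipsi) (use mulH phiH RX in blast)
    finally show "\<phi> (?mul R X) = ?mul R (\<phi> X)" .
  qed
  then show ?thesis by blast
qed

end

theorem proposition2p4:
  fixes \<iota> :: "'f::field \<Rightarrow> 'h::comm_ring_1" and \<theta> :: "'h \<Rightarrow> 'h" and z0 z1 :: 'h and m :: int
  assumes "is_alg_map \<iota>"
    and "is_alg_automorphism \<iota> \<theta>"
    and "\<exists>w. z1 * w = 1"
  shows "\<exists>\<phi>. gwa_left_module_iso \<iota> \<theta> z0 z1 (gwa_Hdu \<iota> \<theta> z0 z1)
              (gwa_component \<iota> \<theta> z0 z1 m) (gwa_Hdu \<iota> \<theta> z0 z1) \<phi>"
proof -
  interpret gw \<iota> \<theta> z0 z1 using assms by (unfold_locales) auto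
  show ?thesis by (rule main)
qed


end
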